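(* Let $I^d\subsetneq\mathbb{R}^d$ be a proper interval with the restricted Borel $\sigma$-algebra, let $\mu$ be a probability measure on it, and let $f:I^d\to I^d$ be an ergodic $\mu$-preserving transformation. Then the permutation entropy rate of $f$ equals its metric (Kolmogorov–Sinai) entropy rate: $h^*_\mu(f)=h_\mu(f)$.
   Context: Product partitions: $\iota=\prod_{k=1}^d\{I_{1,k},\ldots,I_{N_k,k}\}$ is a partition of $I^d$ into $N_1\cdots N_d$ subintervals, the $k$-th factor splitting the $k$-th coordinate range into $N_k$ consecutive intervals of lengths $\Delta_{j,k}$; its norm is $\|\iota\|=\max_{j,k}\Delta_{j,k}$. The cells are enumerated lexicographically as $\iota=\{I^d_i:1\le i\le N_1\cdots N_d\}$ with $I^d_i<I^d_{i+1}$. The simple observations of $f$ with respect to $\iota$ are the finite-alphabet stationary process $\mathbf{S}^\iota=(S^\iota_n)_{n\ge0}$ on $(I^d,\mu)$ defined by $S^\iota_n(x)=i$ iff $f^n(x)\in I^d_i$, with alphabet $\{1,\ldots,N_1\cdots N_d\}$ ordered as integers. For a finite-alphabet process $\mathbf{S}$, the rank variables are $R_n=\sum_{i\le n}\delta(S_i\le S_n)$ (indices running over the observed block starting at its first element; $\delta(P)=1$ if $P$ holds, else $0$) and the permutation entropy rate is $h^*_m(\mathbf{S})=\lim_{L\to\infty}\frac{1}{L-1}H(R_1^L)$ (Shannon entropy, base 2, of the rank word of a block of length $L$). The permutation entropy rate of $f$ is $h^*_\mu(f):=\lim_{\|\iota\|\to0}h^*_m(\mathbf{S}^\iota)$. The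 metric entropy rate is $h_\mu(f)=\sup_\alpha\lim_{L\to\infty}\frac1L H_\mu\big(\bigvee_{i=0}^{L-1}f^{-i}\alpha\big)$, the supremum over finite measurable partitions $\alpha$, with $H_\mu(\beta)=-\sum_{B\in\beta}\mu(B)\log_2\mu(B)$. *)

theory Defs
  imports "HOL-Probability.Probability"
begin

definition entr :: "real \<Rightarrow> real" where
  "entr p = (if p > 0 then - p * log 2 p else 0)"

definition measure_preserving_map :: "'a measure \<Rightarrow> ('a \<Rightarrow> 'a) \<Rightarrow> bool" where
  "measure_preserving_map M f \<longleftrightarrow> f \<in> measurable M M \<and>
     (\<forall>A\<in>sets M. measure M (f -` A \<inter> space M) = measure M A)"

definition ergodic :: "'a measure \<Rightarrow> ('a \<Rightarrow> 'a) \<Rightarrow> bool" where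
  "ergodic M f \<longleftrightarrow> measure_preserving_map M f \<and>
     (\<forall>A\<in>sets M. f -` A \<inter> space M = A \<longrightarrow> measure M A = 0 \<or> measure M A = 1)"

definition finite_meas_partition :: "'a measure \<Rightarrow> 'a set set \<Rightarrow> bool" where
  "finite_meas_partition M \<alpha> \<longleftrightarrow> finite \<alpha> \<and> \<alpha> \<subseteq> sets M \<and> \<Union>\<alpha> = space M \<and>
     (\<forall>A\<in>\<alpha>. \<forall>B\<in>\<alpha>. A \<noteq> B \<longrightarrow> A \<inter> B = {})"

definition part_entropy :: "'a measure \<Rightarrow> 'a set set \<Rightarrow> real" where
  "part_entropy M \<beta> = (\<Sum>B\<in>\<beta>. entr (measure M B))"

definition dyn_join :: "'a measure \<Rightarrow> ('a \<Rightarrow> 'a) \<Rightarrow> 'a set set \<Rightarrow> nat \<Rightarrow> 'a set set" where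
  "dyn_join M f \<alpha> L =
     {space M \<inter> (\<Inter>i\<in>{..<L}. (f ^^ i) -` (A i)) | A. A \<in> {..<L} \<rightarrow> \<alpha>}"

definition ks_entropy :: "'a measure \<Rightarrow> ('a \<Rightarrow> 'a) \<Rightarrow> ereal" where
  "ks_entropy M f = (SUP \<alpha>\<in>{\<alpha>. finite_meas_partition M \<alpha>}.
      ereal (lim (\<lambda>L. part_entropy M (dyn_join M f \<alpha> L) / real L)))"

definition interval_partition :: "real set \<Rightarrow> real set list \<Rightarrow> bool" where
  "interval_partition J P \<longleftrightarrow> P \<noteq> [] \<and>
     (\<forall>j<length P. is_interval (P ! j) \<and> P ! j \<noteq> {}) \<and>
     \<Union>(set P) = J \<and>
     (\<forall>j<length P. \<forall>j'<length P. j \<noteq> j' \<longrightarrow> P ! j \<inter> P ! j' = {}) \<and>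
     (\<forall>j. Suc j < length P \<longrightarrow> (\<forall>x\<in>P ! j. \<forall>y\<in>P ! Suc j. x < y))"

definition prod_partition :: "('d \<Rightarrow> real set) \<Rightarrow> ('d \<Rightarrow> real set list) \<Rightarrow> bool" where
  "prod_partition J P \<longleftrightarrow> (\<forall>k. interval_partition (J k) (P k))"

definition box_of :: "('d::finite \<Rightarrow> real set) \<Rightarrow> ((real, 'd) vec) set" where
  "box_of J = {x. \<forall>k. x $ k \<in> J k}"

definition part_norm :: "('d::finite \<Rightarrow> real set list) \<Rightarrow> real" where
  "part_norm P = Max {diameter (P k ! j) | k j. j < length (P k)}"

definition cell_idx :: "('d \<Rightarrow> real set list) \<Rightarrow> 'd \<Rightarrow> real \<Rightarrow> nat" where
  "cell_idx P k t = (THE j. j < length (P k) \<and> t \<in> P k ! j)"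

text \<open>Lexicographic enumeration of the cells: the cell with coordinate indices
  (j_1,...,j_d) (0-based, first coordinate most significant) gets number
  1 + sum_k j_k * prod_{k'>k} N_{k'}, a number in {1..N_1...N_d}.\<close>
definition cell_number :: "('d::{finite,linorder} \<Rightarrow> real set list) \<Rightarrow> (real, 'd) vec \<Rightarrow> nat" where
  "cell_number P x = 1 + (\<Sum>k\<in>UNIV. cell_idx P k (x $ k) * (\<Prod>k'\<in>{k'. k < k'}. length (P k')))"

definition simple_obs :: "('d::{finite,linorder} \<Rightarrow> real set list) \<Rightarrow> ((real, 'd) vec \<Rightarrow> (real, 'd) vec)
     \<Rightarrow> nat \<Rightarrow> (real, 'd) vec \<Rightarrow> nat" where
  "simple_obs P f n x = cell_number P ((f ^^ n) x)"

definition rank_word :: "(nat \<Rightarrow> 'a \<Rightarrow> nat) \<Rightarrow> nat \<Rightarrow> 'a \<Rightarrow> nat list" where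
  "rank_word S L x = map (\<lambda>n. card {i. i \<le> n \<and> S i x \<le> S n x}) [0..<L]"

definition rank_entropy :: "'a measure \<Rightarrow> (nat \<Rightarrow> 'a \<Rightarrow> nat) \<Rightarrow> nat \<Rightarrow> real" where
  "rank_entropy M S L =
     (\<Sum>w\<in>rank_word S L ` space M. entr (measure M {x\<in>space M. rank_word S L x = w}))"

definition perm_entropy_seq :: "'a measure \<Rightarrow> (nat \<Rightarrow> 'a \<Rightarrow> nat) \<Rightarrow> nat \<Rightarrow> real" where
  "perm_entropy_seq M S L = rank_entropy M S L / real (L - 1)"

definition perm_entropy_rate_proc :: "'a measure \<Rightarrow> (nat \<Rightarrow> 'a \<Rightarrow> nat) \<Rightarrow> real" where
  "perm_entropy_rate_proc M S = lim (perm_entropy_seq M S)"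

definition fine_partitions :: "('d::finite \<Rightarrow> real set) \<Rightarrow> ('d \<Rightarrow> real set list) filter" where
  "fine_partitions J = (INF \<delta>\<in>{0<..}. principal {P. prod_partition J P \<and> part_norm P < \<delta>})"

end

theory Submission
  imports Defs "HOL-Real_Asymp.Real_Asymp"
begin


lemma fekete_aux:
  fixes a :: "nat \<Rightarrow> real"
  assumes sub: "\<And>m n. a (m + n) \<le> a m + a n"
  shows "a (q * k + r) \<le> real q * a k + a r"
proof (induction q)
  case 0 then show ?case by simp
next
  case (Suc q)
  have "a (Suc q * k + r) = a (k + (q * k + r))" by (simp add: algebra_simps)
  also have "\<dots> \<le> a k + a (q * k + r)" by (rule sub)
  also have "\<dots> \<le> a k + (real q * a k + a r)" using Suc by simp
  finally show ?case by (simp add: algebra_simps)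
qed

lemma fekete:
  fixes a :: "nat \<Rightarrow> real"
  assumes sub: "\<And>m n. a (m + n) \<le> a m + a n" and nn: "\<And>n. 0 \<le> a n"
  shows "convergent (\<lambda>n. a n / real n)"
proof -
  define S where "S = (\<lambda>n. a n / real n) ` {1..}"
  define l where "l = Inf S"
  have bdd: "bdd_below S" unfolding S_def using nn by (intro bdd_belowI[of _ 0]) auto
  have Sne: "S \<noteq> {}" unfolding S_def by auto
  have lle: "l \<le> a n / real n" if "n \<ge> 1" for n
    unfolding l_def using that bdd by (intro cInf_lower) (auto simp: S_def)
  have "(\<lambda>n. a n / real n) \<longlonglongrightarrow> l"
  proof (rule LIMSEQ_I)
    fix e :: real assume e: "0 < e"
    have "l < l + e/2" using e by simp
    then obtain s where "s \<in> S" "s < l + e/2" unfolding l_def using cInf_less_iff[OF Sne bdd, of "Inf S + e/2"] by auto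
    then obtain k where k: "k \<ge> 1" "a k / real k < l + e/2" unfolding S_def by auto
    define C where "C = Max (a ` {..<k})"
    have C: "a r \<le> C" if "r < k" for r unfolding C_def using that by (intro Max_ge) auto
    have C0: "0 \<le> C" using C[of 0] nn[of 0] k by auto
    obtain N :: nat where N: "N > 2 * C / e" using reals_Archimedean2 by blast
    show "\<exists>no. \<forall>n\<ge>no. norm (a n / real n - l) < e"
    proof (intro exI[of _ "N + 1"] allI impI)
      fix n assume n: "n \<ge> N + 1"
      then have n1: "n \<ge> 1" and npos: "real n > 0" by auto
      define q where "q = n div k"
      define r where "r = n mod k"
      have nqr: "n = q * k + r" by (simp add: q_def r_def)
      have rk: "r < k" using k by (simp add: r_def)
      have "a n \<le> real q * a k + a r" using fekete_aux[OF sub, of q k r] nqr by simp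
      also have "\<dots> \<le> real q * a k + C" using C[OF rk] by simp
      finally have an: "a n \<le> real q * a k + C" .
      have "real q * real k \<le> real n" using nqr by (metis le_add1 of_nat_le_iff of_nat_mult)
      then have "(real q * real k) * a k \<le> real n * a k"
        using nn[of k] by (intro mult_right_mono) auto
      then have "real q * a k \<le> real n * (a k / real k)"
        using k by (simp add: field_simps)
      then have "a n \<le> real n * (a k / real k) + C" using an by simp
      then have "a n / real n \<le> a k / real k + C / real n" using npos by (simp add: field_simps)
      moreover have "C / real n < e / 2"
      proof -
        have "real n > 2 * C / e" using N n by linarith
        then have "real n * e > 2 * C" using e by (simp add: field_simps)
        then show ?thesis using npos e by (simp add: field_simps)
      qed
      ultimately have "a n / real n < l + e" using k(2) by linarith
      moreover have "l \<le> a n / real n" by (rule lle[OF n1])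
      ultimately show "norm (a n / real n - l) < e" by simp
    qed
  qed
  then show ?thesis by (rule convergentI)
qed


lemma entr_0[simp]: "entr 0 = 0" by (simp add: entr_def)

lemma entr_nonneg: "0 \<le> p \<Longrightarrow> p \<le> 1 \<Longrightarrow> 0 \<le> entr p"
  by (auto simp: entr_def mult_nonneg_nonpos)

lemma entr_add_le:
  assumes "0 \<le> a" "0 \<le> b" shows "entr (a + b) \<le> entr a + entr b"
proof (cases "a = 0 \<or> b = 0")
  case True then show ?thesis using assms by auto
next
  case False
  then have a: "a > 0" and b: "b > 0" using assms by auto
  have "log 2 a \<le> log 2 (a+b)" using a b by simp
  moreover have "log 2 b \<le> log 2 (a+b)" using a b by simp
  ultimately have "a * log 2 a + b * log 2 b \<le> a * log 2 (a+b) + b * log 2 (a+b)"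
    using a b by (intro add_mono mult_left_mono) auto
  then show ?thesis using a b by (simp add: entr_def algebra_simps)
qed

lemma entr_sum_le:
  assumes "finite A" "\<And>x. x \<in> A \<Longrightarrow> 0 \<le> p x"
  shows "entr (\<Sum>x\<in>A. p x) \<le> (\<Sum>x\<in>A. entr (p x))"
  using assms
proof (induction A rule: finite_induct)
  case empty then show ?case by simp
next
  case (insert a A)
  have "entr (\<Sum>x\<in>insert a A. p x) = entr (p a + (\<Sum>x\<in>A. p x))" using insert by simp
  also have "\<dots> \<le> entr (p a) + entr (\<Sum>x\<in>A. p x)"
    by (rule entr_add_le) (auto intro!: sum_nonneg insert.prems)
  also have "\<dots> \<le> entr (p a) + (\<Sum>x\<in>A. entr (p x))" using insert by auto
  finally show ?case using insert by simp
qed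

lemma gibbs_term:
  assumes "0 \<le> p" "0 \<le> q" "p > 0 \<Longrightarrow> q > 0"
  shows "entr p \<le> (if p > 0 then - p * log 2 q else 0) + (q - p) / ln 2"
proof (cases "p > 0")
  case False
  then have "p = 0" using assms by auto
  then show ?thesis using assms by simp
next
  case True
  then have q: "q > 0" using assms by auto
  have "ln (q / p) \<le> q / p - 1" using q True by (intro ln_le_minus_one) auto
  then have "p * ln (q/p) \<le> p * (q/p - 1)" using True by (intro mult_left_mono) auto
  then have "p * (ln q - ln p) \<le> q - p" using True q by (simp add: ln_div algebra_simps)
  then have "(- p * ln p) \<le> - p * ln q + (q - p)" by (simp add: algebra_simps)
  then have "(- p * ln p) / ln 2 \<le> (- p * ln q + (q - p)) / ln 2"
    by (intro divide_right_mono) auto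
  then show ?thesis using True by (simp add: entr_def log_def add_divide_distrib diff_divide_distrib)
qed

lemma gibbs:
  assumes "finite S" "\<And>v. v \<in> S \<Longrightarrow> 0 \<le> p v" "\<And>v. v \<in> S \<Longrightarrow> 0 \<le> q v"
    "\<And>v. v \<in> S \<Longrightarrow> p v > 0 \<Longrightarrow> q v > 0"
  shows "(\<Sum>v\<in>S. entr (p v)) \<le> (\<Sum>v\<in>S. if p v > 0 then - p v * log 2 (q v) else 0)
      + ((\<Sum>v\<in>S. q v) - (\<Sum>v\<in>S. p v)) / ln 2"
proof -
  have "(\<Sum>v\<in>S. entr (p v)) \<le> (\<Sum>v\<in>S. (if p v > 0 then - p v * log 2 (q v) else 0) + (q v - p v) / ln 2)"
    by (intro sum_mono gibbs_term) (auto simp: assms)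
  also have "\<dots> = (\<Sum>v\<in>S. if p v > 0 then - p v * log 2 (q v) else 0) + ((\<Sum>v\<in>S. q v) - (\<Sum>v\<in>S. p v)) / ln 2"
    by (simp add: sum.distrib sum_divide_distrib[symmetric] sum_subtractf)
  finally show ?thesis .
qed

lemma entr_sum_le_log_card:
  assumes "finite S" "\<And>v. v \<in> S \<Longrightarrow> 0 \<le> q v" "(\<Sum>v\<in>S. q v) = p"
  shows "(\<Sum>v\<in>S. entr (q v)) \<le> entr p + p * log 2 (card S)"
proof (cases "p > 0")
  case False
  then have "p = 0" using assms sum_nonneg[of S q] by force
  then have "\<forall>v\<in>S. q v = 0" using assms sum_nonneg_eq_0_iff[of S q] by auto
  then show ?thesis using \<open>p = 0\<close> by simp
next
  case True
  then have ne: "S \<noteq> {}" using assms by auto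
  then have c: "card S > 0" using assms by (simp add: card_gt_0_iff)
  have "(\<Sum>v\<in>S. entr (q v)) \<le> (\<Sum>v\<in>S. if q v > 0 then - q v * log 2 (p / card S) else 0)
      + ((\<Sum>v\<in>S. p / card S) - (\<Sum>v\<in>S. q v)) / ln 2"
    by (rule gibbs) (use assms True c in auto)
  also have "(\<Sum>v\<in>S. p / card S) = p" using c by simp
  also have "(\<Sum>v\<in>S. if q v > 0 then - q v * log 2 (p / card S) else 0) = (\<Sum>v\<in>S. - q v * log 2 (p / card S))"
    by (intro sum.cong) (use assms in force)+
  also have "\<dots> = - p * log 2 (p / card S)" using assms by (simp add: sum_negf sum_distrib_right[symmetric])
  also have "\<dots> = entr p + p * log 2 (card S)" using True c by (simp add: entr_def log_divide algebra_simps)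
  finally show ?thesis using assms by simp
qed

definition rv :: "'a measure \<Rightarrow> ('a \<Rightarrow> 'b) \<Rightarrow> bool" where
  "rv M X \<longleftrightarrow> finite (X ` space M) \<and> (\<forall>v. {x\<in>space M. X x = v} \<in> sets M)"

definition Hent :: "'a measure \<Rightarrow> ('a \<Rightarrow> 'b) \<Rightarrow> real" where
  "Hent M X = (\<Sum>v\<in>X ` space M. entr (measure M {x\<in>space M. X x = v}))"

context prob_space
begin

lemma rv_finite: "rv M X \<Longrightarrow> finite (X ` space M)" by (simp add: rv_def)
lemma rv_fiber: "rv M X \<Longrightarrow> {x\<in>space M. X x = v} \<in> sets M" by (simp add: rv_def)

lemma rv_set_eq: "{x\<in>space M. X x \<in> T} = (\<Union>v\<in>X ` space M \<inter> T. {x\<in>space M. X x = v})"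
  by auto

lemma rv_set: assumes "rv M X" shows "{x\<in>space M. X x \<in> T} \<in> sets M"
  unfolding rv_set_eq using assms
  by (intro sets.finite_UN) (auto simp: rv_def)

lemma fiber_sum:
  assumes "rv M X"
  shows "prob {x\<in>space M. X x \<in> T} = (\<Sum>v\<in>X ` space M \<inter> T. prob {x\<in>space M. X x = v})"
  unfolding rv_set_eq using assms
  by (intro finite_measure_finite_Union) (auto simp: rv_def disjoint_family_on_def)

lemma fiber_sum_1:
  assumes "rv M X"
  shows "(\<Sum>v\<in>X ` space M. prob {x\<in>space M. X x = v}) = 1"
  using fiber_sum[OF assms, of UNIV] by (simp add: prob_space)

lemma Hent_nonneg: "0 \<le> Hent M X"
  unfolding Hent_def by (intro sum_nonneg entr_nonneg) auto

lemma rv_fun_eq: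
  assumes "\<forall>x\<in>space M. \<forall>y\<in>space M. X x = X y \<longrightarrow> Y x = Y y"
  defines "g \<equiv> \<lambda>v. Y (SOME x. x \<in> space M \<and> X x = v)"
  shows "\<And>x. x \<in> space M \<Longrightarrow> Y x = g (X x)"
proof -
  fix x assume x: "x \<in> space M"
  then have "\<exists>y. y \<in> space M \<and> X y = X x" by auto
  then have "(SOME y. y \<in> space M \<and> X y = X x) \<in> space M \<and> X (SOME y. y \<in> space M \<and> X y = X x) = X x"
    by (rule someI_ex)
  then show "Y x = g (X x)" using assms x unfolding g_def by metis
qed

lemma rv_fun:
  assumes X: "rv M X" and hfun: "\<forall>x\<in>space M. \<forall>y\<in>space M. X x = X y \<longrightarrow> Y x = Y y"
  shows "rv M Y"
proof -
  define g where "g \<equiv> \<lambda>v. Y (SOME x. x \<in> space M \<and> X x = v)"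
  have Yg: "\<And>x. x \<in> space M \<Longrightarrow> Y x = g (X x)" using rv_fun_eq[OF hfun] unfolding g_def by blast
  have "Y ` space M = g ` X ` space M" using Yg by (auto simp: image_iff)
  then have "finite (Y ` space M)" using X by (simp add: rv_def)
  moreover have "{x\<in>space M. Y x = w} = {x\<in>space M. X x \<in> {v. g v = w}}" for w using Yg by auto
  ultimately show ?thesis using rv_set[OF X] unfolding rv_def by metis
qed

lemma Hent_fun:
  assumes X: "rv M X" and hfun: "\<forall>x\<in>space M. \<forall>y\<in>space M. X x = X y \<longrightarrow> Y x = Y y"
  shows "Hent M Y \<le> Hent M X"
proof -
  define g where "g \<equiv> \<lambda>v. Y (SOME x. x \<in> space M \<and> X x = v)"
  have Yg: "\<And>x. x \<in> space M \<Longrightarrow> Y x = g (X x)" using rv_fun_eq[OF hfun] unfolding g_def by blast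
  have im: "Y ` space M = g ` X ` space M" using Yg by (auto simp: image_iff)
  have fin: "finite (X ` space M)" using X by (simp add: rv_def)
  let ?p = "\<lambda>v. prob {x\<in>space M. X x = v}"
  have "Hent M Y = (\<Sum>w\<in>Y ` space M. entr (prob {x\<in>space M. X x \<in> {v. g v = w}}))"
    unfolding Hent_def using Yg by (intro sum.cong refl arg_cong[where f=entr] arg_cong[where f=prob]) auto
  also have "\<dots> = (\<Sum>w\<in>Y ` space M. entr (\<Sum>v\<in>{v\<in>X ` space M. g v = w}. ?p v))"
  proof (intro sum.cong refl arg_cong[where f=entr])
    fix w
    have "X ` space M \<inter> {v. g v = w} = {v\<in>X ` space M. g v = w}" by auto
    then show "prob {x\<in>space M. X x \<in> {v. g v = w}} = (\<Sum>v\<in>{v\<in>X ` space M. g v = w}. ?p v)"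
      using fiber_sum[OF X, of "{v. g v = w}"] by simp
  qed
  also have "\<dots> \<le> (\<Sum>w\<in>Y ` space M. \<Sum>v\<in>{v\<in>X ` space M. g v = w}. entr (?p v))"
    by (intro sum_mono entr_sum_le) (use fin in auto)
  also have "\<dots> = (\<Sum>v\<in>X ` space M. entr (?p v))"
    by (rule sum.group) (use fin im in auto)
  finally show ?thesis by (simp add: Hent_def)
qed

lemma Hent_cong:
  assumes "\<And>x. x \<in> space M \<Longrightarrow> X x = Y x" shows "Hent M X = Hent M Y"
proof -
  have "X ` space M = Y ` space M" using assms by (auto simp: image_iff)
  moreover have "{x\<in>space M. X x = v} = {x\<in>space M. Y x = v}" for v using assms by auto
  ultimately show ?thesis by (simp add: Hent_def)
qed

lemma rv_pair:
  assumes X: "rv M X" and Y: "rv M Y" shows "rv M (\<lambda>x. (X x, Y x))"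
proof -
  have "(\<lambda>x. (X x, Y x)) ` space M \<subseteq> X ` space M \<times> Y ` space M" by auto
  moreover have "finite (X ` space M \<times> Y ` space M)" using X Y by (simp add: rv_def)
  ultimately have "finite ((\<lambda>x. (X x, Y x)) ` space M)" by (rule finite_subset)
  moreover have "{x\<in>space M. (X x, Y x) = v} = {x\<in>space M. X x = fst v} \<inter> {x\<in>space M. Y x = snd v}" for v
    by (cases v) auto
  ultimately show ?thesis using X Y by (auto simp: rv_def)
qed

lemma Hent_le_log_card:
  assumes X: "rv M X" and T: "finite T" "X ` space M \<subseteq> T"
  shows "Hent M X \<le> log 2 (card T)"
proof -
  have "Hent M X \<le> entr 1 + 1 * log 2 (card (X ` space M))"
    unfolding Hent_def by (rule entr_sum_le_log_card) (use fiber_sum_1[OF X] X in \<open>auto simp: rv_def\<close>)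
  also have "\<dots> \<le> log 2 (card T)"
  proof -
    have "card (X ` space M) > 0" using X not_empty by (auto simp: rv_def card_gt_0_iff)
    moreover have "card (X ` space M) \<le> card T" using T by (intro card_mono)
    ultimately show ?thesis by (simp add: entr_def)
  qed
  finally show ?thesis .
qed

lemma marg_sum:
  assumes X: "rv M X" and Y: "rv M Y"
  shows "prob {x\<in>space M. X x = a} = (\<Sum>b\<in>Y ` space M. prob {x\<in>space M. X x = a \<and> Y x = b})"
proof -
  have "{x\<in>space M. X x = a} = (\<Union>b\<in>Y ` space M. {x\<in>space M. X x = a \<and> Y x = b})" by auto
  also have "prob \<dots> = (\<Sum>b\<in>Y ` space M. prob {x\<in>space M. X x = a \<and> Y x = b})"
  proof (intro finite_measure_finite_Union)
    show "(\<lambda>b. {x \<in> space M. X x = a \<and> Y x = b}) ` Y ` space M \<subseteq> events"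
    proof
      fix B assume "B \<in> (\<lambda>b. {x \<in> space M. X x = a \<and> Y x = b}) ` Y ` space M"
      then obtain b where "B = {x\<in>space M. X x = a} \<inter> {x\<in>space M. Y x = b}" by auto
      then show "B \<in> events" using X Y by (auto simp: rv_def)
    qed
  qed (use Y in \<open>auto simp: rv_def disjoint_family_on_def\<close>)
  finally show ?thesis .
qed

lemma entr_eq_log: "0 \<le> p \<Longrightarrow> entr p = - p * log 2 p"
  by (cases "p = 0") (auto simp: entr_def)

lemma Hent_pair_le:
  assumes X: "rv M X" and Y: "rv M Y"
  shows "Hent M (\<lambda>x. (X x, Y x)) \<le> Hent M X + Hent M Y"
proof -
  define A where "A = X ` space M"
  define B where "B = Y ` space M"
  define pa where "pa a = prob {x\<in>space M. X x = a}" for a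
  define pb where "pb b = prob {x\<in>space M. Y x = b}" for b
  define pxy where "pxy v = prob {x\<in>space M. (X x, Y x) = v}" for v
  have fA: "finite A" and fB: "finite B" using X Y by (auto simp: rv_def A_def B_def)
  have XY: "rv M (\<lambda>x. (X x, Y x))" by (rule rv_pair[OF X Y])
  have sub: "(\<lambda>x. (X x, Y x)) ` space M \<subseteq> A \<times> B" by (auto simp: A_def B_def)
  have pxy_ab: "pxy (a, b) = prob {x\<in>space M. X x = a \<and> Y x = b}" for a b by (simp add: pxy_def)
  have "Hent M (\<lambda>x. (X x, Y x)) = (\<Sum>v\<in>A \<times> B. entr (pxy v))"
    unfolding Hent_def pxy_def
  proof (rule sum.mono_neutral_left)
    show "\<forall>i\<in>A \<times> B - (\<lambda>x. (X x, Y x)) ` space M. entr (prob {x \<in> space M. (X x, Y x) = i}) = 0"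
    proof
      fix i assume "i \<in> A \<times> B - (\<lambda>x. (X x, Y x)) ` space M"
      then have e: "{x \<in> space M. (X x, Y x) = i} = {}" by force
      show "entr (prob {x \<in> space M. (X x, Y x) = i}) = 0" unfolding e by simp
    qed
  qed (use fA fB sub in auto)
  also have "\<dots> \<le> (\<Sum>v\<in>A \<times> B. if pxy v > 0 then - pxy v * log 2 (pa (fst v) * pb (snd v)) else 0)
      + ((\<Sum>v\<in>A \<times> B. pa (fst v) * pb (snd v)) - (\<Sum>v\<in>A \<times> B. pxy v)) / ln 2"
  proof (rule gibbs)
    fix v assume v: "v \<in> A \<times> B" "pxy v > 0"
    obtain a b where ab: "v = (a, b)" by (cases v)
    have "pxy v \<le> pa a" unfolding ab pxy_ab pa_def by (rule finite_measure_mono) (use X in \<open>auto simp: rv_def\<close>)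
    moreover have "pxy v \<le> pb b" unfolding ab pxy_ab pb_def by (rule finite_measure_mono) (use Y in \<open>auto simp: rv_def\<close>)
    ultimately show "pa (fst v) * pb (snd v) > 0" using v ab by simp
  qed (use fA fB in \<open>auto simp: pa_def pb_def pxy_def\<close>)
  also have "(\<Sum>v\<in>A \<times> B. pa (fst v) * pb (snd v)) = 1"
  proof -
    have "(\<Sum>v\<in>A \<times> B. pa (fst v) * pb (snd v)) = (\<Sum>a\<in>A. \<Sum>b\<in>B. pa a * pb b)"
      by (simp add: sum.cartesian_product split_def)
    also have "\<dots> = (\<Sum>a\<in>A. pa a) * (\<Sum>b\<in>B. pb b)" by (simp add: sum_product)
    also have "\<dots> = 1" using fiber_sum_1[OF X] fiber_sum_1[OF Y] by (simp add: A_def B_def pa_def pb_def)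
    finally show ?thesis .
  qed
  also have "(\<Sum>v\<in>A \<times> B. pxy v) = 1"
  proof -
    have "(\<Sum>v\<in>A \<times> B. pxy v) = (\<Sum>v\<in>(\<lambda>x. (X x, Y x)) ` space M. pxy v)"
      unfolding pxy_def
    proof (rule sum.mono_neutral_right)
      show "\<forall>i\<in>A \<times> B - (\<lambda>x. (X x, Y x)) ` space M. prob {x \<in> space M. (X x, Y x) = i} = 0"
      proof
        fix i assume "i \<in> A \<times> B - (\<lambda>x. (X x, Y x)) ` space M"
        then have e: "{x \<in> space M. (X x, Y x) = i} = {}" by force
        show "prob {x \<in> space M. (X x, Y x) = i} = 0" unfolding e by simp
      qed
    qed (use fA fB sub in auto)
    then show ?thesis using fiber_sum_1[OF XY] by (simp add: pxy_def)
  qed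
  also have "(\<Sum>v\<in>A \<times> B. if pxy v > 0 then - pxy v * log 2 (pa (fst v) * pb (snd v)) else 0)
      = (\<Sum>v\<in>A \<times> B. - pxy v * log 2 (pa (fst v)) + - pxy v * log 2 (pb (snd v)))"
  proof (rule sum.cong[OF refl])
    fix v assume v: "v \<in> A \<times> B"
    obtain a b where ab: "v = (a, b)" by (cases v)
    show "(if pxy v > 0 then - pxy v * log 2 (pa (fst v) * pb (snd v)) else 0)
      = - pxy v * log 2 (pa (fst v)) + - pxy v * log 2 (pb (snd v))"
    proof (cases "pxy v > 0")
      case True
      have "pxy v \<le> pa a" unfolding ab pxy_ab pa_def by (rule finite_measure_mono) (use X in \<open>auto simp: rv_def\<close>)
      moreover have "pxy v \<le> pb b" unfolding ab pxy_ab pb_def by (rule finite_measure_mono) (use Y in \<open>auto simp: rv_def\<close>)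
      ultimately show ?thesis using True ab by (simp add: log_mult algebra_simps)
    next
      case False
      then have "pxy v = 0" by (simp add: pxy_def not_less measure_le_0_iff)
      then show ?thesis by simp
    qed
  qed
  also have "\<dots> = (\<Sum>a\<in>A. entr (pa a)) + (\<Sum>b\<in>B. entr (pb b))"
  proof -
    have 1: "(\<Sum>v\<in>A \<times> B. - pxy v * log 2 (pa (fst v))) = (\<Sum>a\<in>A. entr (pa a))"
    proof -
      have "(\<Sum>v\<in>A \<times> B. - pxy v * log 2 (pa (fst v))) = (\<Sum>a\<in>A. \<Sum>b\<in>B. - pxy (a,b) * log 2 (pa a))"
        by (simp add: sum.cartesian_product split_def)
      also have "\<dots> = (\<Sum>a\<in>A. - (\<Sum>b\<in>B. pxy (a,b)) * log 2 (pa a))"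
        by (simp add: sum_distrib_right sum_negf)
      also have "\<dots> = (\<Sum>a\<in>A. entr (pa a))"
        by (intro sum.cong refl) (simp add: pxy_ab marg_sum[OF X Y] B_def pa_def entr_eq_log sum_nonneg)
      finally show ?thesis .
    qed
    have 2: "(\<Sum>v\<in>A \<times> B. - pxy v * log 2 (pb (snd v))) = (\<Sum>b\<in>B. entr (pb b))"
    proof -
      have "(\<Sum>v\<in>A \<times> B. - pxy v * log 2 (pb (snd v))) = (\<Sum>a\<in>A. \<Sum>b\<in>B. - pxy (a,b) * log 2 (pb b))"
        by (simp add: sum.cartesian_product split_def)
      also have "\<dots> = (\<Sum>b\<in>B. \<Sum>a\<in>A. - pxy (a,b) * log 2 (pb b))" by (rule sum.swap)
      also have "\<dots> = (\<Sum>b\<in>B. - (\<Sum>a\<in>A. pxy (a,b)) * log 2 (pb b))"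
        by (simp add: sum_distrib_right sum_negf)
      also have "\<dots> = (\<Sum>b\<in>B. entr (pb b))"
      proof (intro sum.cong refl)
        fix b
        have "pb b = (\<Sum>a\<in>A. pxy (a,b))"
          unfolding pb_def pxy_ab A_def using marg_sum[OF Y X, of b] by (simp add: conj_commute)
        moreover have "0 \<le> pb b" by (simp add: pb_def)
        ultimately show "- (\<Sum>a\<in>A. pxy (a,b)) * log 2 (pb b) = entr (pb b)" by (simp add: entr_eq_log)
      qed
      finally show ?thesis .
    qed
    show ?thesis unfolding sum.distrib 1 2 by (rule refl)
  qed
  finally show ?thesis by (simp add: Hent_def A_def B_def pa_def pb_def)
qed

end


definition blk :: "('a \<Rightarrow> 'a) \<Rightarrow> ('a \<Rightarrow> 'b) \<Rightarrow> nat \<Rightarrow> 'a \<Rightarrow> 'b list" where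
  "blk f X L x = map (\<lambda>i. X ((f ^^ i) x)) [0..<L]"

lemma length_blk[simp]: "length (blk f X L x) = L" by (simp add: blk_def)
lemma nth_blk[simp]: "i < L \<Longrightarrow> blk f X L x ! i = X ((f ^^ i) x)" by (simp add: blk_def)

lemma blk_Suc: "blk f X (Suc L) x = blk f X L x @ [X ((f ^^ L) x)]"
  by (simp add: blk_def)

lemma blk_add: "blk f X (m + n) x = blk f X m x @ blk f X n ((f ^^ m) x)"
proof (rule nth_equalityI)
  fix i assume i: "i < length (blk f X (m + n) x)"
  show "blk f X (m + n) x ! i = (blk f X m x @ blk f X n ((f ^^ m) x)) ! i"
  proof (cases "i < m")
    case True then show ?thesis using i by (simp add: nth_append)
  next
    case False
    then have "(f ^^ i) x = (f ^^ (i - m)) ((f ^^ m) x)"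
      by (metis funpow_add le_add_diff_inverse2 not_less o_apply)
    then show ?thesis using i False by (simp add: nth_append)
  qed
qed simp

lemma mp_measurable: "measure_preserving_map M f \<Longrightarrow> f \<in> measurable M M"
  by (simp add: measure_preserving_map_def)

lemma mp_space: "measure_preserving_map M f \<Longrightarrow> x \<in> space M \<Longrightarrow> f x \<in> space M"
  by (meson measurable_space mp_measurable)

lemma funpow_measurable: "f \<in> measurable M M \<Longrightarrow> (f ^^ n) \<in> measurable M M"
proof (induction n)
  case 0 then show ?case by (simp add: measurable_ident_sets)
next
  case (Suc n)
  have "f \<circ> (f ^^ n) \<in> measurable M M" by (rule measurable_comp[OF Suc.IH[OF Suc.prems] Suc.prems])
  then show ?case by (simp only: funpow.simps(2))
qed

lemma mp_funpow:
  assumes mp: "measure_preserving_map M f" shows "measure_preserving_map M (f ^^ n)"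
proof (induction n)
  case 0
  have "id \<in> measurable M M" by (simp add: measurable_ident_sets)
  moreover have "\<forall>A\<in>sets M. id -` A \<inter> space M = A" using sets.sets_into_space by auto
  ultimately show ?case unfolding measure_preserving_map_def funpow_0 by (simp add: id_def)
next
  case (Suc n)
  have meas: "f ^^ Suc n \<in> measurable M M" using funpow_measurable[OF mp_measurable[OF mp]] by blast
  show ?case unfolding measure_preserving_map_def
  proof (intro conjI meas ballI)
    fix A assume A: "A \<in> sets M"
    have B: "(f ^^ n) -` A \<inter> space M \<in> sets M"
      using measurable_sets[OF funpow_measurable[OF mp_measurable[OF mp]] A] by blast
    have "(f ^^ Suc n) -` A \<inter> space M = f -` ((f ^^ n) -` A \<inter> space M) \<inter> space M"
    proof -
      have "(f ^^ Suc n) = (f ^^ n) \<circ> f" by (rule funpow_Suc_right)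
      then show ?thesis using mp_space[OF mp] by auto
    qed
    moreover have "measure M (f -` ((f ^^ n) -` A \<inter> space M) \<inter> space M) = measure M ((f ^^ n) -` A \<inter> space M)"
      using mp B unfolding measure_preserving_map_def by blast
    ultimately have "measure M ((f ^^ Suc n) -` A \<inter> space M) = measure M ((f ^^ n) -` A \<inter> space M)"
      by (simp only:)
    also have "\<dots> = measure M A" using Suc A unfolding measure_preserving_map_def by blast
    finally show "measure M ((f ^^ Suc n) -` A \<inter> space M) = measure M A" .
  qed
qed

context prob_space
begin

lemma rv_comp:
  assumes g: "measure_preserving_map M g" and X: "rv M X"
  shows "rv M (\<lambda>x. X (g x))"
proof -
  have "(\<lambda>x. X (g x)) ` space M \<subseteq> X ` space M" using mp_space[OF g] by auto
  then have "finite ((\<lambda>x. X (g x)) ` space M)" using X by (auto simp: rv_def intro: finite_subset)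
  moreover have "{x\<in>space M. X (g x) = v} = g -` {y\<in>space M. X y = v} \<inter> space M" for v
    using mp_space[OF g] by auto
  moreover have "g -` {y\<in>space M. X y = v} \<inter> space M \<in> sets M" for v
    using measurable_sets[OF mp_measurable[OF g] rv_fiber[OF X]] .
  ultimately show ?thesis by (simp add: rv_def)
qed

lemma Hent_comp:
  assumes g: "measure_preserving_map M g" and X: "rv M X"
  shows "Hent M (\<lambda>x. X (g x)) = Hent M X"
proof -
  have fib: "prob {x\<in>space M. X (g x) = v} = prob {x\<in>space M. X x = v}" for v
  proof -
    have "{x\<in>space M. X (g x) = v} = g -` {y\<in>space M. X y = v} \<inter> space M"
      using mp_space[OF g] by auto
    moreover have "prob (g -` {y\<in>space M. X y = v} \<inter> space M) = prob {y\<in>space M. X y = v}"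
      using g rv_fiber[OF X] unfolding measure_preserving_map_def by blast
    ultimately show ?thesis by simp
  qed
  have sub: "(\<lambda>x. X (g x)) ` space M \<subseteq> X ` space M" using mp_space[OF g] by auto
  have "Hent M (\<lambda>x. X (g x)) = (\<Sum>v\<in>(\<lambda>x. X (g x)) ` space M. entr (prob {x\<in>space M. X x = v}))"
    unfolding Hent_def fib ..
  also have "\<dots> = (\<Sum>v\<in>X ` space M. entr (prob {x\<in>space M. X x = v}))"
  proof (rule sum.mono_neutral_left)
    show "\<forall>i\<in>X ` space M - (\<lambda>x. X (g x)) ` space M. entr (prob {x \<in> space M. X x = i}) = 0"
    proof
      fix i assume i: "i \<in> X ` space M - (\<lambda>x. X (g x)) ` space M"
      then have e: "{x \<in> space M. X (g x) = i} = {}" by force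
      show "entr (prob {x \<in> space M. X x = i}) = 0" using fib[of i] unfolding e by simp
    qed
  qed (use X sub in \<open>auto simp: rv_def\<close>)
  finally show ?thesis by (simp add: Hent_def)
qed

lemma rv_blk:
  assumes f: "measure_preserving_map M f" and X: "rv M X"
  shows "rv M (blk f X L)"
proof (induction L)
  case 0
  have "blk f X 0 ` space M \<subseteq> {[]}" by (auto simp: blk_def)
  then have "finite (blk f X 0 ` space M)" by (rule finite_subset) simp
  moreover have "{x\<in>space M. blk f X 0 x = v} = (if v = [] then space M else {})" for v
    by (auto simp: blk_def)
  ultimately show ?case by (simp add: rv_def)
next
  case (Suc L)
  have "rv M (\<lambda>x. (blk f X L x, X ((f ^^ L) x)))"
    by (rule rv_pair[OF Suc rv_comp[OF mp_funpow[OF f] X]])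
  then show ?case by (rule rv_fun) (auto simp: blk_Suc)
qed

lemma Hent_blk_add:
  assumes f: "measure_preserving_map M f" and X: "rv M X"
  shows "Hent M (blk f X (m + n)) \<le> Hent M (blk f X m) + Hent M (blk f X n)"
proof -
  have r1: "rv M (blk f X m)" by (rule rv_blk[OF f X])
  have r2: "rv M (\<lambda>x. blk f X n ((f ^^ m) x))" by (rule rv_comp[OF mp_funpow[OF f] rv_blk[OF f X]])
  have "Hent M (blk f X (m + n)) \<le> Hent M (\<lambda>x. (blk f X m x, blk f X n ((f ^^ m) x)))"
    by (rule Hent_fun[OF rv_pair[OF r1 r2]]) (simp add: blk_add)
  also have "\<dots> \<le> Hent M (blk f X m) + Hent M (\<lambda>x. blk f X n ((f ^^ m) x))"
    by (rule Hent_pair_le[OF r1 r2])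
  also have "Hent M (\<lambda>x. blk f X n ((f ^^ m) x)) = Hent M (blk f X n)"
    by (rule Hent_comp[OF mp_funpow[OF f] rv_blk[OF f X]])
  finally show ?thesis .
qed

lemma Hent_blk_le:
  assumes f: "measure_preserving_map M f" and X: "rv M X"
  shows "Hent M (blk f X L) \<le> real L * Hent M X"
proof (induction L)
  case 0
  have "Hent M (blk f X 0) \<le> log 2 (card {[] :: 'b list})"
    by (rule Hent_le_log_card[OF rv_blk[OF f X]]) (auto simp: blk_def)
  then show ?case by simp
next
  case (Suc L)
  have "Hent M (blk f X (L + 1)) \<le> Hent M (blk f X L) + Hent M (blk f X 1)"
    by (rule Hent_blk_add[OF f X])
  moreover have "Hent M (blk f X 1) \<le> Hent M X"
    by (rule Hent_fun[OF X]) (simp add: blk_def)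
  ultimately have "Hent M (blk f X (Suc L)) \<le> Hent M (blk f X L) + Hent M X" by simp
  moreover have "real (Suc L) * Hent M X = real L * Hent M X + Hent M X" by (simp add: distrib_right)
  ultimately show ?case using Suc.IH by linarith
qed

lemma blk_convergent:
  assumes f: "measure_preserving_map M f" and X: "rv M X"
  shows "convergent (\<lambda>L. Hent M (blk f X L) / real L)"
proof -
  have a: "\<And>m n. Hent M (blk f X (m + n)) \<le> Hent M (blk f X m) + Hent M (blk f X n)"
    by (rule Hent_blk_add[OF f X])
  have b: "\<And>n. 0 \<le> Hent M (blk f X n)" by (rule Hent_nonneg)
  show ?thesis using fekete[of "\<lambda>L. Hent M (blk f X L)", OF a b] .
qed

end



lemma rank_order_agree_aux:
  fixes s t :: "nat \<Rightarrow> nat"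
  assumes IH: "\<And>a b. a < b \<Longrightarrow> b < j \<Longrightarrow> (s a \<le> s b \<longleftrightarrow> t a \<le> t b)"
    and a: "a < j" "s a \<le> s j" "\<not> t a \<le> t j"
  shows "{i. i < j \<and> t i \<le> t j} \<subset> {i. i < j \<and> s i \<le> s j}"
proof -
  have "{i. i < j \<and> t i \<le> t j} \<subseteq> {i. i < j \<and> s i \<le> s j}"
  proof
    fix b assume b: "b \<in> {i. i < j \<and> t i \<le> t j}"
    show "b \<in> {i. i < j \<and> s i \<le> s j}"
    proof (rule ccontr)
      assume nb: "b \<notin> {i. i < j \<and> s i \<le> s j}"
      then have sb: "\<not> s b \<le> s j" using b by auto
      have "b \<noteq> a" using a b sb by auto
      then consider "b < a" | "a < b" by linarith
      then show False
      proof cases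
        case 1
        then have "s b \<le> s a \<longleftrightarrow> t b \<le> t a" using IH a by auto
        then show False using a b sb by auto
      next
        case 2
        then have "s a \<le> s b \<longleftrightarrow> t a \<le> t b" using IH b by auto
        then show False using a b sb by auto
      qed
    qed
  qed
  moreover have "a \<in> {i. i < j \<and> s i \<le> s j}" "a \<notin> {i. i < j \<and> t i \<le> t j}" using a by auto
  ultimately show ?thesis by blast
qed

lemma card_le_insert: "card {i. i \<le> (n::nat) \<and> P i} = (if P n then Suc (card {i. i < n \<and> P i}) else card {i. i < n \<and> P i})"
proof (cases "P n")
  case True
  then have "{i. i \<le> n \<and> P i} = insert n {i. i < n \<and> P i}" by (auto simp: le_less)
  then show ?thesis using True by simp
next
  case False
  then have "{i. i \<le> n \<and> P i} = {i. i < n \<and> P i}" by (auto simp: le_less)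
  then show ?thesis using False by simp
qed

lemma rank_order_agree:
  fixes s t :: "nat \<Rightarrow> nat"
  assumes R: "\<And>n. n < L \<Longrightarrow> card {i. i \<le> n \<and> s i \<le> s n} = card {i. i \<le> n \<and> t i \<le> t n}"
  shows "j < L \<Longrightarrow> i < j \<Longrightarrow> (s i \<le> s j \<longleftrightarrow> t i \<le> t j)"
proof (induction j arbitrary: i rule: less_induct)
  case (less j)
  have IH: "\<And>a b. a < b \<Longrightarrow> b < j \<Longrightarrow> (s a \<le> s b \<longleftrightarrow> t a \<le> t b)" using less by auto
  have IH': "\<And>a b. a < b \<Longrightarrow> b < j \<Longrightarrow> (t a \<le> t b \<longleftrightarrow> s a \<le> s b)" using IH by blast
  have c: "card {i. i < j \<and> s i \<le> s j} = card {i. i < j \<and> t i \<le> t j}"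
    using R[OF less(2)] by (simp add: card_le_insert)
  show ?case
  proof (rule ccontr)
    assume "\<not> (s i \<le> s j \<longleftrightarrow> t i \<le> t j)"
    then consider "s i \<le> s j" "\<not> t i \<le> t j" | "t i \<le> t j" "\<not> s i \<le> s j" by blast
    then show False
    proof cases
      case 1
      have "{i. i < j \<and> t i \<le> t j} \<subset> {i. i < j \<and> s i \<le> s j}"
        by (rule rank_order_agree_aux[OF IH less(3) 1])
      then have "card {i. i < j \<and> t i \<le> t j} < card {i. i < j \<and> s i \<le> s j}"
        by (intro psubset_card_mono) auto
      then show False using c by simp
    next
      case 2
      have "{i. i < j \<and> s i \<le> s j} \<subset> {i. i < j \<and> t i \<le> t j}"
        by (rule rank_order_agree_aux[OF IH' less(3) 2])
      then have "card {i. i < j \<and> s i \<le> s j} < card {i. i < j \<and> t i \<le> t j}"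
        by (intro psubset_card_mono) auto
      then show False using c by simp
    qed
  qed
qed

lemma rank_counts_aux:
  fixes s t :: "nat \<Rightarrow> nat"
  assumes agree: "\<And>i j. i < j \<Longrightarrow> j < L \<Longrightarrow> (s i \<le> s j \<longleftrightarrow> t i \<le> t j)"
    and n: "n < L" "s n < t n"
  shows "{i. i < L \<and> t i \<le> s n} \<subset> {i. i < L \<and> s i \<le> s n}"
proof -
  have "{i. i < L \<and> t i \<le> s n} \<subseteq> {i. i < L \<and> s i \<le> s n}"
  proof
    fix b assume b: "b \<in> {i. i < L \<and> t i \<le> s n}"
    show "b \<in> {i. i < L \<and> s i \<le> s n}"
    proof (rule ccontr)
      assume "b \<notin> {i. i < L \<and> s i \<le> s n}"
      then have sb: "\<not> s b \<le> s n" using b by auto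
      consider "b < n" | "n < b" | "b = n" by linarith
      then show False
      proof cases
        case 1 then show False using agree[OF 1 n(1)] b sb n by auto
      next
        case 2 then show False using agree[OF 2] b sb n by auto
      next
        case 3 then show False using b n by auto
      qed
    qed
  qed
  moreover have "n \<in> {i. i < L \<and> s i \<le> s n}" "n \<notin> {i. i < L \<and> t i \<le> s n}" using n by auto
  ultimately show ?thesis by blast
qed

lemma rank_counts_determine:
  fixes s t :: "nat \<Rightarrow> nat"
  assumes R: "\<And>n. n < L \<Longrightarrow> card {i. i \<le> n \<and> s i \<le> s n} = card {i. i \<le> n \<and> t i \<le> t n}"
    and C: "\<And>v. v \<le> V \<Longrightarrow> card {i. i < L \<and> s i \<le> v} = card {i. i < L \<and> t i \<le> v}"
    and bs: "\<And>i. i < L \<Longrightarrow> s i \<le> V" and bt: "\<And>i. i < L \<Longrightarrow> t i \<le> V"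
    and n: "n < L"
  shows "s n = t n"
proof (rule ccontr)
  have agree: "\<And>i j. i < j \<Longrightarrow> j < L \<Longrightarrow> (s i \<le> s j \<longleftrightarrow> t i \<le> t j)"
    using rank_order_agree[OF R] by blast
  have agree': "\<And>i j. i < j \<Longrightarrow> j < L \<Longrightarrow> (t i \<le> t j \<longleftrightarrow> s i \<le> s j)"
    using agree by blast
  assume "s n \<noteq> t n"
  then consider "s n < t n" | "t n < s n" by linarith
  then show False
  proof cases
    case 1
    have "card {i. i < L \<and> t i \<le> s n} < card {i. i < L \<and> s i \<le> s n}"
      using psubset_card_mono[OF _ rank_counts_aux[where s=s and t=t, OF agree n 1]] by auto
    then show False using C[OF bs[OF n]] by simp
  next
    case 2
    have "card {i. i < L \<and> s i \<le> t n} < card {i. i < L \<and> t i \<le> t n}"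
      using psubset_card_mono[OF _ rank_counts_aux[where s=t and t=s, OF agree' n 2]] by auto
    then show False using C[OF bt[OF n]] by simp
  qed
qed



definition pidx :: "'a set set \<Rightarrow> 'a \<Rightarrow> 'a set" where
  "pidx \<alpha> x = (THE A. A \<in> \<alpha> \<and> x \<in> A)"

definition hrate :: "'a measure \<Rightarrow> ('a \<Rightarrow> 'a) \<Rightarrow> ('a \<Rightarrow> 'b) \<Rightarrow> real" where
  "hrate M f X = lim (\<lambda>L. Hent M (blk f X L) / real L)"

lemma pidx_unique:
  assumes "finite_meas_partition M \<alpha>" "A \<in> \<alpha>" "x \<in> A"
  shows "pidx \<alpha> x = A"
  unfolding pidx_def
proof (rule the_equality)
  fix B assume "B \<in> \<alpha> \<and> x \<in> B"
  then show "B = A" using assms unfolding finite_meas_partition_def by blast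
qed (use assms in auto)

lemma pidx_in:
  assumes P: "finite_meas_partition M \<alpha>" and x: "x \<in> space M"
  shows "pidx \<alpha> x \<in> \<alpha> \<and> x \<in> pidx \<alpha> x"
proof -
  have "x \<in> \<Union>\<alpha>" using P x by (simp add: finite_meas_partition_def)
  then obtain A where "A \<in> \<alpha>" "x \<in> A" by auto
  then show ?thesis using pidx_unique[OF P] by auto
qed

context prob_space
begin

lemma rv_pidx:
  assumes P: "finite_meas_partition M \<alpha>" shows "rv M (pidx \<alpha>)"
proof -
  have "pidx \<alpha> ` space M \<subseteq> \<alpha>" using pidx_in[OF P] by auto
  then have "finite (pidx \<alpha> ` space M)" using P by (auto simp: finite_meas_partition_def intro: finite_subset)
  moreover have "{x\<in>space M. pidx \<alpha> x = A} \<in> sets M" for A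
  proof (cases "A \<in> \<alpha>")
    case True
    have "{x\<in>space M. pidx \<alpha> x = A} = A"
    proof
      show "{x\<in>space M. pidx \<alpha> x = A} \<subseteq> A" using pidx_in[OF P] by auto
      show "A \<subseteq> {x\<in>space M. pidx \<alpha> x = A}"
        using True P pidx_unique[OF P True] by (auto simp: finite_meas_partition_def)
    qed
    then show ?thesis using True P by (auto simp: finite_meas_partition_def)
  next
    case False
    then have e: "{x\<in>space M. pidx \<alpha> x = A} = {}" using pidx_in[OF P] by auto
    show ?thesis unfolding e by simp
  qed
  ultimately show ?thesis by (simp add: rv_def)
qed

lemma part_entropy_dyn_join:
  assumes P: "finite_meas_partition M \<alpha>" and f: "measure_preserving_map M f"
  shows "part_entropy M (dyn_join M f \<alpha> L) = Hent M (blk f (pidx \<alpha>) L)"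
proof -
  let ?B = "blk f (pidx \<alpha>) L"
  define D where "D A = space M \<inter> (\<Inter>i\<in>{..<L}. (f ^^ i) -` (A i))" for A :: "nat \<Rightarrow> 'a set"
  define fib where "fib w = {x\<in>space M. ?B x = w}" for w
  have sp: "(f ^^ i) x \<in> space M" if "x \<in> space M" for i x
    using mp_space[OF mp_funpow[OF f] that] .
  have fibD: "fib (?B y) = D (\<lambda>i. ?B y ! i)" if y: "y \<in> space M" for y
  proof -
    have "x \<in> fib (?B y) \<longleftrightarrow> x \<in> D (\<lambda>i. ?B y ! i)" if x: "x \<in> space M" for x
    proof -
      have "?B x = ?B y \<longleftrightarrow> (\<forall>i<L. pidx \<alpha> ((f ^^ i) x) = pidx \<alpha> ((f ^^ i) y))"
        by (simp add: list_eq_iff_nth_eq)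
      also have "\<dots> \<longleftrightarrow> (\<forall>i<L. (f ^^ i) x \<in> pidx \<alpha> ((f ^^ i) y))"
        using pidx_in[OF P sp[OF x]] pidx_in[OF P sp[OF y]] pidx_unique[OF P] by metis
      finally show ?thesis using x by (auto simp: fib_def D_def)
    qed
    moreover have "fib (?B y) \<subseteq> space M" "D (\<lambda>i. ?B y ! i) \<subseteq> space M" by (auto simp: fib_def D_def)
    ultimately show ?thesis by blast
  qed
  have dj: "dyn_join M f \<alpha> L = D ` ({..<L} \<rightarrow> \<alpha>)" by (auto simp: dyn_join_def D_def)
  have fib_in: "fib ` (?B ` space M) \<subseteq> dyn_join M f \<alpha> L"
  proof
    fix F assume "F \<in> fib ` (?B ` space M)"
    then obtain y where y: "y \<in> space M" "F = fib (?B y)" by auto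
    have "(\<lambda>i. ?B y ! i) \<in> {..<L} \<rightarrow> \<alpha>" using pidx_in[OF P sp[OF y(1)]] by auto
    then show "F \<in> dyn_join M f \<alpha> L" unfolding dj y(2) fibD[OF y(1)] by blast
  qed
  have dj_sub: "dyn_join M f \<alpha> L \<subseteq> insert {} (fib ` (?B ` space M))"
  proof
    fix F assume "F \<in> dyn_join M f \<alpha> L"
    then obtain A where A: "A \<in> {..<L} \<rightarrow> \<alpha>" "F = D A" unfolding dj by auto
    show "F \<in> insert {} (fib ` (?B ` space M))"
    proof (cases "F = {}")
      case False
      then obtain x where x: "x \<in> F" by auto
      then have xs: "x \<in> space M" and xi: "\<And>i. i < L \<Longrightarrow> (f ^^ i) x \<in> A i" using A by (auto simp: D_def)
      have Ai: "A i = pidx \<alpha> ((f ^^ i) x)" if "i < L" for i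
        using pidx_unique[OF P _ xi[OF that]] A that by auto
      have "F = D (\<lambda>i. ?B x ! i)"
        unfolding A(2) D_def using Ai by (auto simp: D_def)
      then have "F = fib (?B x)" using fibD[OF xs] by simp
      then show ?thesis using xs by auto
    qed simp
  qed
  have fin: "finite (?B ` space M)" using rv_blk[OF f rv_pidx[OF P]] by (simp add: rv_def)
  have inj: "inj_on fib (?B ` space M)"
  proof (rule inj_onI)
    fix u v assume "u \<in> ?B ` space M" "v \<in> ?B ` space M" "fib u = fib v"
    then obtain y where "y \<in> space M" "u = ?B y" "fib u = fib v" by auto
    then have "y \<in> fib v" by (auto simp: fib_def)
    then show "u = v" using \<open>u = ?B y\<close> by (auto simp: fib_def)
  qed
  have "part_entropy M (dyn_join M f \<alpha> L) = (\<Sum>F\<in>fib ` (?B ` space M). entr (measure M F))"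
    unfolding part_entropy_def
  proof (rule sum.mono_neutral_right)
    show "finite (dyn_join M f \<alpha> L)" using dj_sub fin by (rule finite_subset[OF _ finite_insert[THEN iffD2, OF finite_imageI]])
  qed (use fib_in dj_sub in auto)
  also have "\<dots> = (\<Sum>w\<in>?B ` space M. entr (measure M (fib w)))"
    by (rule sum.reindex[OF inj, unfolded comp_def])
  finally show ?thesis by (simp add: Hent_def fib_def)
qed

end


lemma lim_aux1: "(\<lambda>L::nat. real L / (real L - 1)) \<longlonglongrightarrow> 1" by real_asymp
lemma lim_aux2: "(\<lambda>L::nat. log 2 (real L + 1) / (real L - 1)) \<longlonglongrightarrow> 0" by real_asymp

context prob_space
begin

lemma rank_le_blk:
  assumes f: "measure_preserving_map M f" and X: "rv M X" and S: "\<And>n x. S n x = X ((f ^^ n) x)"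
  shows "Hent M (rank_word S L) \<le> Hent M (blk f X L)"
proof (rule Hent_fun[OF rv_blk[OF f X]], intro ballI impI)
  fix x y assume "x \<in> space M" "y \<in> space M" and e: "blk f X L x = blk f X L y"
  have "S i x = S i y" if "i < L" for i using e that nth_blk[OF that, of f X] S by metis
  then show "rank_word S L x = rank_word S L y"
    unfolding rank_word_def by (intro map_cong refl arg_cong[where f=card]) auto
qed

lemma rv_rank:
  assumes f: "measure_preserving_map M f" and X: "rv M X" and S: "\<And>n x. S n x = X ((f ^^ n) x)"
  shows "rv M (rank_word S L)"
proof (rule rv_fun[OF rv_blk[OF f X]], intro ballI impI)
  fix x y assume "x \<in> space M" "y \<in> space M" and e: "blk f X L x = blk f X L y"
  have "S i x = S i y" if "i < L" for i using e that nth_blk[OF that, of f X] S by metis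
  then show "rank_word S L x = rank_word S L y"
    unfolding rank_word_def by (intro map_cong refl arg_cong[where f=card]) auto
qed

lemma blk_le_rank:
  assumes f: "measure_preserving_map M f" and X: "rv M X" and S: "\<And>n x. S n x = X ((f ^^ n) x)"
    and V: "\<And>x. x \<in> space M \<Longrightarrow> X x \<le> V"
  shows "Hent M (blk f X L) \<le> Hent M (rank_word S L) + real (Suc V) * log 2 (real L + 1)"
proof -
  define C where "C x = map (\<lambda>v. card {i. i < L \<and> S i x \<le> v}) [0..<Suc V]" for x
  have sp: "(f ^^ i) x \<in> space M" if "x \<in> space M" for i x
    using mp_space[OF mp_funpow[OF f] that] .
  have rC: "rv M C"
  proof (rule rv_fun[OF rv_blk[OF f X]], intro ballI impI)
    fix x y assume "x \<in> space M" "y \<in> space M" and e: "blk f X L x = blk f X L y"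
    have "S i x = S i y" if "i < L" for i using e that nth_blk[OF that, of f X] S by metis
    then show "C x = C y"
      unfolding C_def by (intro map_cong refl arg_cong[where f=card]) auto
  qed
  have rR: "rv M (rank_word S L)" by (rule rv_rank[OF f X S])
  have "Hent M (blk f X L) \<le> Hent M (\<lambda>x. (rank_word S L x, C x))"
  proof (rule Hent_fun[OF rv_pair[OF rR rC]], intro ballI impI)
    fix x y assume x: "x \<in> space M" and y: "y \<in> space M" and e: "(rank_word S L x, C x) = (rank_word S L y, C y)"
    have R: "card {i. i \<le> n \<and> S i x \<le> S n x} = card {i. i \<le> n \<and> S i y \<le> S n y}" if "n < L" for n
    proof -
      have "rank_word S L x ! n = rank_word S L y ! n" using e by simp
      then show ?thesis using that by (simp add: rank_word_def)
    qed
    have Cv: "card {i. i < L \<and> S i x \<le> v} = card {i. i < L \<and> S i y \<le> v}" if "v \<le> V" for v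
    proof -
      have "v < length [0..<Suc V]" using that by simp
      then have "C x ! v = C y ! v" using e by simp
      then show ?thesis using that unfolding C_def by (simp del: upt_Suc)
    qed
    have bx: "S i x \<le> V" for i using V[OF sp[OF x]] S by simp
    have by': "S i y \<le> V" for i using V[OF sp[OF y]] S by simp
    have Sn: "S n x = S n y" if "n < L" for n
      by (rule rank_counts_determine[where s="\<lambda>i. S i x" and t="\<lambda>i. S i y", OF R Cv bx by' that])
    show "blk f X L x = blk f X L y"
    proof (rule nth_equalityI)
      fix i assume "i < length (blk f X L x)"
      then have i: "i < L" by simp
      have "X ((f ^^ i) x) = X ((f ^^ i) y)" using Sn[OF i] unfolding S .
      then show "blk f X L x ! i = blk f X L y ! i" using i by simp
    qed simp
  qed
  also have "\<dots> \<le> Hent M (rank_word S L) + Hent M C" by (rule Hent_pair_le[OF rR rC])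
  finally have 1: "Hent M (blk f X L) \<le> Hent M (rank_word S L) + Hent M C" .
  have "Hent M C \<le> log 2 (card {xs. set xs \<subseteq> {..L} \<and> length xs = Suc V})"
  proof (rule Hent_le_log_card[OF rC])
    show "finite {xs. set xs \<subseteq> {..L} \<and> length xs = Suc V}" by (rule finite_lists_length_eq) simp
    show "C ` space M \<subseteq> {xs. set xs \<subseteq> {..L} \<and> length xs = Suc V}"
    proof
      fix w assume "w \<in> C ` space M"
      then obtain x where w: "w = C x" by auto
      have "card {i. i < L \<and> S i x \<le> v} \<le> L" for v
        using card_mono[of "{..<L}" "{i. i < L \<and> S i x \<le> v}"] by auto
      then show "w \<in> {xs. set xs \<subseteq> {..L} \<and> length xs = Suc V}" unfolding w C_def by auto
    qed
  qed
  also have "log 2 (card {xs. set xs \<subseteq> {..L} \<and> length xs = Suc V}) = real (Suc V) * log 2 (real L + 1)"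
  proof -
    have "card {xs. set xs \<subseteq> {..L} \<and> length xs = Suc V} = (Suc L) ^ Suc V"
      using card_lists_length_eq[of "{..L}" "Suc V"] by simp
    then have "real (card {xs. set xs \<subseteq> {..L} \<and> length xs = Suc V}) = (real L + 1) ^ Suc V"
      by (simp only: of_nat_power of_nat_Suc add.commute)
    then show ?thesis by (simp only: log_nat_power[of "real L + 1"])
  qed
  finally show ?thesis using 1 by linarith
qed

lemma perm_entropy_conv:
  assumes f: "measure_preserving_map M f" and X: "rv M X" and S: "\<And>n x. S n x = X ((f ^^ n) x)"
    and V: "\<And>x. x \<in> space M \<Longrightarrow> X x \<le> V"
  shows "perm_entropy_seq M S \<longlonglongrightarrow> hrate M f X"
proof -
  define a where "a L = Hent M (blk f X L)" for L
  define r where "r L = Hent M (rank_word S L)" for L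
  define h where "h = hrate M f X"
  define c where "c = real (Suc V)"
  have ah: "(\<lambda>L. a L / real L) \<longlonglongrightarrow> h"
    using blk_convergent[OF f X] unfolding a_def h_def hrate_def by (simp add: convergent_LIMSEQ_iff)
  have rk: "perm_entropy_seq M S L = r L / real (L - 1)" for L
    by (simp add: perm_entropy_seq_def rank_entropy_def r_def Hent_def)
  have up: "(\<lambda>L. a L / (real L - 1)) \<longlonglongrightarrow> h"
  proof -
    have "(\<lambda>L. (a L / real L) * (real L / (real L - 1))) \<longlonglongrightarrow> h * 1"
      by (intro tendsto_mult ah lim_aux1)
    then have 1: "(\<lambda>L. (a L / real L) * (real L / (real L - 1))) \<longlonglongrightarrow> h" by simp
    have 2: "eventually (\<lambda>L. (a L / real L) * (real L / (real L - 1)) = a L / (real L - 1)) sequentially"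
      using eventually_gt_at_top[of 0]
    proof eventually_elim
      case (elim L) then show ?case by simp
    qed
    show ?thesis by (rule Lim_transform_eventually[OF 1 2])
  qed
  have low0: "(\<lambda>L. a L / (real L - 1) - c * (log 2 (real L + 1) / (real L - 1))) \<longlonglongrightarrow> h - c * 0"
    by (intro tendsto_diff tendsto_mult up tendsto_const lim_aux2)
  have low: "(\<lambda>L. a L / (real L - 1) - c * (log 2 (real L + 1) / (real L - 1))) \<longlonglongrightarrow> h"
    using low0 by simp
  have "(\<lambda>L. r L / (real L - 1)) \<longlonglongrightarrow> h"
  proof (rule tendsto_sandwich[OF _ _ low up])
    show "eventually (\<lambda>L. a L / (real L - 1) - c * (log 2 (real L + 1) / (real L - 1)) \<le> r L / (real L - 1)) sequentially"
      using eventually_gt_at_top[of 1]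
    proof eventually_elim
      case (elim L)
      have "a L \<le> r L + c * log 2 (real L + 1)" unfolding a_def r_def c_def by (rule blk_le_rank[OF f X S V])
      then have "(a L - c * log 2 (real L + 1)) / (real L - 1) \<le> r L / (real L - 1)"
        using elim by (intro divide_right_mono) auto
      then show ?case by (simp add: diff_divide_distrib)
    qed
    show "eventually (\<lambda>L. r L / (real L - 1) \<le> a L / (real L - 1)) sequentially"
      using eventually_gt_at_top[of 1]
    proof eventually_elim
      case (elim L)
      have "r L \<le> a L" unfolding a_def r_def by (rule rank_le_blk[OF f X S])
      then show ?case using elim by (intro divide_right_mono) auto
    qed
  qed
  moreover have "eventually (\<lambda>L. r L / (real L - 1) = perm_entropy_seq M S L) sequentially"
    using eventually_gt_at_top[of 0]
  proof eventually_elim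
    case (elim L) then show ?case by (simp add: rk of_nat_diff)
  qed
  ultimately show ?thesis unfolding h_def by (rule Lim_transform_eventually)
qed

end


lemma entr_le_sqrt:
  assumes "0 \<le> p" "p \<le> 1" shows "entr p \<le> 3 * sqrt p"
proof (cases "p = 0")
  case True then show ?thesis by simp
next
  case False
  then have p: "p > 0" using assms by auto
  define s where "s = sqrt p"
  have s: "s > 0" "p = s^2" using p by (auto simp: s_def)
  have "ln (1/s) \<le> 1/s - 1" using s by (intro ln_le_minus_one) auto
  then have ls: "- ln s \<le> 1/s - 1" using s by (simp add: ln_div)
  have "- p * ln p = 2 * s^2 * (- ln s)" using s by (simp add: ln_mult power2_eq_square)
  also have "\<dots> \<le> 2 * s^2 * (1/s - 1)" using ls s by (intro mult_left_mono) auto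
  also have "\<dots> \<le> 2 * s" using s by (simp add: power2_eq_square field_simps)
  finally have 1: "- p * ln p \<le> 2 * s" .
  have l2: "2/3 \<le> ln (2::real)" by (rule ln2_ge_two_thirds)
  have "entr p = (- p * ln p) / ln 2" using p by (simp add: entr_def log_def)
  also have "\<dots> \<le> (2 * s) / ln 2" using 1 l2 by (intro divide_right_mono) auto
  also have "\<dots> \<le> (2 * s) / (2/3)" using l2 s by (intro divide_left_mono) auto
  also have "\<dots> = 3 * sqrt p" by (simp add: s_def)
  finally show ?thesis .
qed

lemma entr_one_minus_le:
  assumes "0 \<le> p" "p \<le> 1" shows "entr (1 - p) \<le> 2 * p"
proof (cases "p = 1")
  case True then show ?thesis by simp
next
  case False
  define q where "q = 1 - p"
  have q: "q > 0" "q \<le> 1" using assms False by (auto simp: q_def)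
  have "ln (1/q) \<le> 1/q - 1" using q by (intro ln_le_minus_one) auto
  then have "- ln q \<le> 1/q - 1" using q by (simp add: ln_div)
  then have "q * (- ln q) \<le> q * (1/q - 1)" using q by (intro mult_left_mono) auto
  then have 1: "- q * ln q \<le> p" using q by (simp add: q_def field_simps)
  have l2: "2/3 \<le> ln (2::real)" by (rule ln2_ge_two_thirds)
  have "entr q = (- q * ln q) / ln 2" using q by (simp add: entr_def log_def)
  also have "\<dots> \<le> p / ln 2" using 1 l2 by (intro divide_right_mono) auto
  also have "\<dots> \<le> p / (2/3)" using l2 assms by (intro divide_left_mono) auto
  also have "\<dots> \<le> 2 * p" using assms by simp
  finally show ?thesis by (simp add: q_def)
qed

context prob_space
begin

lemma hrate_le:
  assumes f: "measure_preserving_map M f" and X: "rv M X" and Y: "rv M Y"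
    and le: "\<And>L. Hent M (blk f X L) \<le> Hent M (blk f Y L) + real L * c"
  shows "hrate M f X \<le> hrate M f Y + c"
proof -
  have cX: "(\<lambda>L. Hent M (blk f X L) / real L) \<longlonglongrightarrow> hrate M f X"
    using blk_convergent[OF f X] unfolding hrate_def by (simp add: convergent_LIMSEQ_iff)
  have cY: "(\<lambda>L. Hent M (blk f Y L) / real L + c) \<longlonglongrightarrow> hrate M f Y + c"
    using blk_convergent[OF f Y] unfolding hrate_def by (intro tendsto_add tendsto_const) (simp add: convergent_LIMSEQ_iff)
  show ?thesis
  proof (rule LIMSEQ_le[OF cX cY], rule exI[of _ 1], intro allI impI)
    fix L :: nat assume "1 \<le> L"
    then have "Hent M (blk f X L) / real L \<le> (Hent M (blk f Y L) + real L * c) / real L"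
      using le[of L] by (intro divide_right_mono) auto
    also have "\<dots> = Hent M (blk f Y L) / real L + c" using \<open>1 \<le> L\<close> by (simp add: field_simps)
    finally show "Hent M (blk f X L) / real L \<le> Hent M (blk f Y L) / real L + c" .
  qed
qed

lemma hrate_perturb:
  fixes a
  assumes f: "measure_preserving_map M f" and X: "rv M X" and Y: "rv M Y"
  defines "Z \<equiv> \<lambda>x. if X x = a (Y x) then None else Some (X x)"
  shows "hrate M f X \<le> hrate M f Y + Hent M Z"
proof -
  have rZ: "rv M Z"
    by (rule rv_fun[OF rv_pair[OF X Y]]) (auto simp: Z_def)
  have sp: "(f ^^ i) x \<in> space M" if "x \<in> space M" for i x
    using mp_space[OF mp_funpow[OF f] that] .
  show ?thesis
  proof (rule hrate_le[OF f X Y])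
    fix L
    have "Hent M (blk f X L) \<le> Hent M (\<lambda>x. (blk f Y L x, blk f Z L x))"
    proof (rule Hent_fun[OF rv_pair[OF rv_blk[OF f Y] rv_blk[OF f rZ]]], intro ballI impI)
      fix x y assume "x \<in> space M" "y \<in> space M" and e: "(blk f Y L x, blk f Z L x) = (blk f Y L y, blk f Z L y)"
      show "blk f X L x = blk f X L y"
      proof (rule nth_equalityI)
        fix i assume "i < length (blk f X L x)"
        then have i: "i < L" by simp
        have "blk f Y L x ! i = blk f Y L y ! i" "blk f Z L x ! i = blk f Z L y ! i" using e by auto
        then have "Y ((f ^^ i) x) = Y ((f ^^ i) y)" "Z ((f ^^ i) x) = Z ((f ^^ i) y)" using i by auto
        then have "X ((f ^^ i) x) = X ((f ^^ i) y)" unfolding Z_def by (auto split: if_splits)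
        then show "blk f X L x ! i = blk f X L y ! i" using i by simp
      qed simp
    qed
    also have "\<dots> \<le> Hent M (blk f Y L) + Hent M (blk f Z L)"
      by (rule Hent_pair_le[OF rv_blk[OF f Y] rv_blk[OF f rZ]])
    also have "Hent M (blk f Z L) \<le> real L * Hent M Z" by (rule Hent_blk_le[OF f rZ])
    finally show "Hent M (blk f X L) \<le> Hent M (blk f Y L) + real L * Hent M Z" by simp
  qed
qed

lemma Hent_Z_bound:
  fixes a
  assumes X: "rv M X" and Y: "rv M Y"
  defines "Z \<equiv> \<lambda>x. if X x = a (Y x) then None else Some (X x)"
  defines "p \<equiv> prob {x\<in>space M. X x \<noteq> a (Y x)}"
  shows "Hent M Z \<le> 2 * p + 3 * sqrt p + p * log 2 (card (X ` space M))"
proof -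
  have rZ: "rv M Z"
    by (rule rv_fun[OF rv_pair[OF X Y]]) (auto simp: Z_def)
  have fX: "finite (X ` space M)" using X by (simp add: rv_def)
  let ?q = "\<lambda>v. prob {x\<in>space M. Z x = v}"
  have sub: "Z ` space M \<subseteq> insert None (Some ` X ` space M)" by (auto simp: Z_def)
  have "Hent M Z = (\<Sum>v\<in>insert None (Some ` X ` space M). entr (?q v))"
    unfolding Hent_def
  proof (rule sum.mono_neutral_left)
    show "\<forall>i\<in>insert None (Some ` X ` space M) - Z ` space M. entr (?q i) = 0"
    proof
      fix i assume "i \<in> insert None (Some ` X ` space M) - Z ` space M"
      then have e: "{x\<in>space M. Z x = i} = {}" by force
      show "entr (?q i) = 0" unfolding e by simp
    qed
  qed (use fX sub in auto)
  also have "\<dots> = entr (?q None) + (\<Sum>b\<in>X ` space M. entr (?q (Some b)))"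
    using fX by (simp add: sum.reindex)
  also have "(\<Sum>b\<in>X ` space M. entr (?q (Some b))) \<le> entr p + p * log 2 (card (X ` space M))"
  proof (rule entr_sum_le_log_card[OF fX])
    have "{x\<in>space M. X x \<noteq> a (Y x)} = (\<Union>b\<in>X ` space M. {x\<in>space M. Z x = Some b})"
      by (auto simp: Z_def)
    moreover have "prob (\<Union>b\<in>X ` space M. {x\<in>space M. Z x = Some b}) = (\<Sum>b\<in>X ` space M. ?q (Some b))"
      by (rule finite_measure_finite_Union) (use fX rZ in \<open>auto simp: rv_def disjoint_family_on_def\<close>)
    ultimately show "(\<Sum>b\<in>X ` space M. ?q (Some b)) = p" unfolding p_def by simp
  qed simp
  also have "?q None = 1 - p"
  proof -
    have "{x\<in>space M. Z x = None} = space M - {x\<in>space M. X x \<noteq> a (Y x)}" by (auto simp: Z_def)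
    moreover have "{x\<in>space M. X x \<noteq> a (Y x)} \<in> sets M"
    proof -
      have "{x\<in>space M. X x \<noteq> a (Y x)} = {x\<in>space M. Z x \<in> range Some}" by (auto simp: Z_def)
      then show ?thesis using rv_set[OF rZ] by simp
    qed
    ultimately show ?thesis unfolding p_def by (simp add: prob_compl)
  qed
  finally have 1: "Hent M Z \<le> entr (1 - p) + (entr p + p * log 2 (card (X ` space M)))" by simp
  have p01: "0 \<le> p" "p \<le> 1" by (auto simp: p_def)
  show ?thesis using 1 entr_le_sqrt[OF p01] entr_one_minus_le[OF p01] by linarith
qed

end


lemma vec_nth_borel: "{x::(real,'d::finite) vec. x $ k \<in> I} \<in> sets borel" if "is_interval I"
proof -
  have m: "(\<lambda>x::(real,'d) vec. x $ k) \<in> borel_measurable borel"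
    by (intro borel_measurable_continuous_onI continuous_intros)
  have "(\<lambda>x::(real,'d) vec. x $ k) -` I \<inter> space borel \<in> sets borel"
    by (rule measurable_sets[OF m real_interval_borel_measurable[OF that]])
  then show ?thesis by (simp add: vimage_def)
qed

definition W :: "('d::linorder \<Rightarrow> nat) \<Rightarrow> 'd set \<Rightarrow> 'd \<Rightarrow> nat" where
  "W N T k = (\<Prod>k'\<in>{k'\<in>T. k < k'}. N k')"

lemma radix:
  fixes T :: "'d::linorder set"
  assumes "finite T"
  shows "(\<forall>k\<in>T. j k < N k) \<longrightarrow> (\<Sum>k\<in>T. j k * W N T k) < (\<Prod>k\<in>T. N k)"
    and "(\<forall>k\<in>T. j k < N k) \<longrightarrow> (\<forall>k\<in>T. j' k < N k) \<longrightarrow>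
         (\<Sum>k\<in>T. j k * W N T k) = (\<Sum>k\<in>T. j' k * W N T k) \<longrightarrow> (\<forall>k\<in>T. j k = j' k)"
  using assms
proof (induction T arbitrary: j j' rule: finite_linorder_min_induct)
  case empty
  { case 1 show ?case by simp }
  { case 2 show ?case by simp }
next
  case (insert b A)
  have bA: "b \<notin> A" using insert by auto
  have Wb: "W N (insert b A) b = (\<Prod>k\<in>A. N k)"
  proof -
    have "{k'\<in>insert b A. b < k'} = A" using insert by auto
    then show ?thesis by (simp add: W_def)
  qed
  have Wk: "W N (insert b A) k = W N A k" if "k \<in> A" for k
  proof -
    have "{k'\<in>insert b A. k < k'} = {k'\<in>A. k < k'}" using insert that by auto
    then show ?thesis by (simp add: W_def)
  qed
  have sumeq: "(\<Sum>k\<in>insert b A. i k * W N (insert b A) k) = i b * (\<Prod>k\<in>A. N k) + (\<Sum>k\<in>A. i k * W N A k)" for i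
  proof -
    have "(\<Sum>k\<in>insert b A. i k * W N (insert b A) k) = i b * W N (insert b A) b + (\<Sum>k\<in>A. i k * W N (insert b A) k)"
      by (rule sum.insert[OF insert.hyps(1) bA])
    also have "(\<Sum>k\<in>A. i k * W N (insert b A) k) = (\<Sum>k\<in>A. i k * W N A k)"
      by (rule sum.cong[OF refl]) (simp add: Wk)
    finally show ?thesis by (simp only: Wb)
  qed
  {
    case 1
    show ?case
    proof
      assume j: "\<forall>k\<in>insert b A. j k < N k"
      have r: "(\<Sum>k\<in>A. j k * W N A k) < (\<Prod>k\<in>A. N k)" using insert.IH(1) j by auto
      have "j b * (\<Prod>k\<in>A. N k) + (\<Sum>k\<in>A. j k * W N A k) < (j b + 1) * (\<Prod>k\<in>A. N k)"
        using r by simp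
      also have "\<dots> \<le> N b * (\<Prod>k\<in>A. N k)" using j by (intro mult_right_mono) auto
      finally show "(\<Sum>k\<in>insert b A. j k * W N (insert b A) k) < (\<Prod>k\<in>insert b A. N k)"
        using sumeq[of j] insert bA by simp
    qed
  }
  {
    case 2
    show ?case
    proof (intro impI)
      assume j: "\<forall>k\<in>insert b A. j k < N k" and j': "\<forall>k\<in>insert b A. j' k < N k"
        and e: "(\<Sum>k\<in>insert b A. j k * W N (insert b A) k) = (\<Sum>k\<in>insert b A. j' k * W N (insert b A) k)"
      define Q where "Q = (\<Prod>k\<in>A. N k)"
      have r: "(\<Sum>k\<in>A. j k * W N A k) < Q" "(\<Sum>k\<in>A. j' k * W N A k) < Q"
        using insert.IH(1)[of j] insert.IH(1)[of j'] j j' by (auto simp: Q_def)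
      have e2: "j b * Q + (\<Sum>k\<in>A. j k * W N A k) = j' b * Q + (\<Sum>k\<in>A. j' k * W N A k)"
        using e sumeq[of j] sumeq[of j'] by (simp add: Q_def)
      have Q0: "Q > 0" using r by simp
      have "(j b * Q + (\<Sum>k\<in>A. j k * W N A k)) div Q = j b" using r Q0 by simp
      moreover have "(j' b * Q + (\<Sum>k\<in>A. j' k * W N A k)) div Q = j' b" using r Q0 by simp
      ultimately have jb: "j b = j' b" using e2 by simp
      then have "(\<Sum>k\<in>A. j k * W N A k) = (\<Sum>k\<in>A. j' k * W N A k)" using e2 by simp
      then have "\<forall>k\<in>A. j k = j' k" using insert.IH(2)[of j j'] j j' by auto
      then show "\<forall>k\<in>insert b A. j k = j' k" using jb by auto
    qed
  }
qed


definition ci :: "('d::finite \<Rightarrow> real set list) \<Rightarrow> (real, 'd) vec \<Rightarrow> 'd \<Rightarrow> nat" where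
  "ci P x = (\<lambda>k. cell_idx P k (x $ k))"

lemma cell_idx_eq:
  assumes "prod_partition J P" "j < length (P k)" "t \<in> P k ! j"
  shows "cell_idx P k t = j"
  unfolding cell_idx_def
proof (rule the_equality)
  fix j' assume j': "j' < length (P k) \<and> t \<in> P k ! j'"
  show "j' = j"
  proof (rule ccontr)
    assume "j' \<noteq> j"
    then have "P k ! j' \<inter> P k ! j = {}" using assms j' by (auto simp: prod_partition_def interval_partition_def)
    then show False using j' assms by auto
  qed
qed (use assms in auto)

lemma cell_idx_in:
  assumes P: "prod_partition J P" and t: "t \<in> J k"
  shows "cell_idx P k t < length (P k) \<and> t \<in> P k ! cell_idx P k t"
proof -
  have "t \<in> \<Union>(set (P k))" using P t by (auto simp: prod_partition_def interval_partition_def)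
  then obtain j where j: "j < length (P k)" "t \<in> P k ! j" by (auto simp: in_set_conv_nth)
  then show ?thesis using cell_idx_eq[OF P j] by simp
qed

lemma in_box: "x \<in> box_of J \<Longrightarrow> x $ k \<in> J k" by (simp add: box_of_def)

lemma cell_number_W:
  "cell_number P x = 1 + (\<Sum>k\<in>UNIV. ci P x k * W (\<lambda>k. length (P k)) UNIV k)"
  by (simp add: cell_number_def W_def ci_def)

lemma ci_lt:
  assumes P: "prod_partition J P" and x: "x \<in> box_of J"
  shows "\<forall>k\<in>UNIV. ci P x k < length (P k)"
proof
  fix k
  show "ci P x k < length (P k)" unfolding ci_def using cell_idx_in[OF P in_box[OF x], of k] by blast
qed

lemma cn_bound:
  assumes P: "prod_partition J P" and x: "x \<in> box_of J"
  shows "cell_number P x \<le> (\<Prod>k\<in>UNIV. length (P k))"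
proof -
  have "(\<Sum>k\<in>UNIV. ci P x k * W (\<lambda>k. length (P k)) UNIV k) < (\<Prod>k\<in>UNIV. length (P k))"
    using radix(1)[of UNIV "ci P x" "\<lambda>k. length (P k)", OF finite_class.finite_UNIV] ci_lt[OF P x] by blast
  then show ?thesis unfolding cell_number_W by linarith
qed

lemma cn_inj:
  assumes P: "prod_partition J P" and x: "x \<in> box_of J" and y: "y \<in> box_of J"
    and e: "cell_number P x = cell_number P y"
  shows "ci P x = ci P y"
proof -
  have "(\<Sum>k\<in>UNIV. ci P x k * W (\<lambda>k. length (P k)) UNIV k) = (\<Sum>k\<in>UNIV. ci P y k * W (\<lambda>k. length (P k)) UNIV k)"
    using e unfolding cell_number_W by linarith
  then have "\<forall>k\<in>UNIV. ci P x k = ci P y k"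
    using radix(2)[of UNIV "ci P x" "\<lambda>k. length (P k)" "ci P y", OF finite_class.finite_UNIV] ci_lt[OF P x] ci_lt[OF P y] by blast
  then show ?thesis by blast
qed

lemma part_norm_ge:
  fixes P :: "'d::finite \<Rightarrow> real set list"
  assumes "j < length (P k)" shows "diameter (P k ! j) \<le> part_norm P"
proof -
  have "{diameter (P k ! j) | k j. j < length (P k)} = (\<lambda>(k, j). diameter (P k ! j)) ` (SIGMA k:UNIV. {..<length (P k)})"
    by auto
  then have "finite {diameter (P k ! j) | k j. j < length (P k)}" by simp
  then show ?thesis unfolding part_norm_def by (rule Max_ge) (use assms in auto)
qed

lemma cell_dist:
  fixes J :: "'d::finite \<Rightarrow> real set"
  assumes P: "prod_partition J P" and bdd: "\<And>k. bounded (J k)"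
    and x: "x \<in> box_of J" and y: "y \<in> box_of J" and e: "ci P x = ci P y"
  shows "dist x y \<le> real CARD('d) * part_norm P"
proof -
  have k: "\<bar>(x - y) $ k\<bar> \<le> part_norm P" for k
  proof -
    define j where "j = ci P x k"
    have j: "j < length (P k)" "x $ k \<in> P k ! j" using cell_idx_in[OF P in_box[OF x]] by (auto simp: j_def ci_def)
    have jy: "y $ k \<in> P k ! j" using cell_idx_in[OF P in_box[OF y]] e by (auto simp: j_def ci_def)
    have "P k ! j \<in> set (P k)" using j(1) by simp
    then have "P k ! j \<subseteq> J k" using P unfolding prod_partition_def interval_partition_def by blast
    then have "bounded (P k ! j)" using bdd bounded_subset by blast
    then have "dist (x $ k) (y $ k) \<le> diameter (P k ! j)" using j(2) jy by (rule diameter_bounded_bound)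
    also have "\<dots> \<le> part_norm P" by (rule part_norm_ge[of j P k, OF j(1)])
    finally show ?thesis by (simp add: dist_real_def)
  qed
  have "dist x y = norm (x - y)" by (simp add: dist_norm)
  also have "\<dots> \<le> (\<Sum>k\<in>UNIV. \<bar>(x - y) $ k\<bar>)" by (rule norm_le_l1_cart)
  also have "\<dots> \<le> (\<Sum>k\<in>(UNIV::'d set). part_norm P)" by (intro sum_mono k)
  also have "\<dots> = real CARD('d) * part_norm P" by simp
  finally show ?thesis .
qed



lemma box_borel:
  fixes J :: "'d::finite \<Rightarrow> real set"
  assumes "\<And>k. is_interval (J k)" shows "box_of J \<in> sets borel"
proof -
  have "box_of J = (\<Inter>k\<in>UNIV. {x::(real,'d) vec. x $ k \<in> J k})" by (auto simp: box_of_def)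
  also have "\<dots> \<in> sets borel" by (intro sets.finite_INT vec_nth_borel assms) auto
  finally show ?thesis .
qed

lemma space_M:
  assumes "sets M = sets (restrict_space borel (box_of J))"
  shows "space M = box_of J"
  using sets_eq_imp_space_eq[OF assms] by (simp add: space_restrict_space)

lemma sets_M_Int:
  assumes "sets M = sets (restrict_space borel (box_of J))" "B \<in> sets borel"
  shows "box_of J \<inter> B \<in> sets M"
  using assms by (auto simp: sets_restrict_space)

lemma rv_ci:
  fixes J :: "'d::{finite,linorder} \<Rightarrow> real set" and M :: "(real,'d) vec measure"
  assumes Mp: "prob_space M" and Ms: "sets M = sets (restrict_space borel (box_of J))" and P: "prod_partition J P"
  shows "rv M (ci P)"
proof -
  interpret prob_space M by (rule Mp)
  have sp: "space M = box_of J" by (rule space_M[OF Ms])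
  have "ci P ` space M \<subseteq> Pi\<^sub>E UNIV (\<lambda>k. {..<length (P k)})"
    using ci_lt[OF P] sp by (auto simp: PiE_UNIV_domain)
  moreover have "finite (Pi\<^sub>E UNIV (\<lambda>k. {..<length (P k)}))" by (intro finite_PiE) auto
  ultimately have fin: "finite (ci P ` space M)" by (rule finite_subset)
  have "{x\<in>space M. ci P x = j} \<in> sets M" for j
  proof (cases "\<forall>k. j k < length (P k)")
    case True
    have "{x\<in>space M. ci P x = j} = box_of J \<inter> (\<Inter>k\<in>UNIV. {x::(real,'d) vec. x $ k \<in> P k ! j k})"
    proof (rule set_eqI)
      fix x
      show "x \<in> {x\<in>space M. ci P x = j} \<longleftrightarrow> x \<in> box_of J \<inter> (\<Inter>k\<in>UNIV. {x::(real,'d) vec. x $ k \<in> P k ! j k})"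
      proof (cases "x \<in> box_of J")
        case xb: True
        have c: "cell_idx P k (x $ k) < length (P k) \<and> x $ k \<in> P k ! cell_idx P k (x $ k)" for k
          by (rule cell_idx_in[OF P in_box[OF xb]])
        have "ci P x = j \<longleftrightarrow> (\<forall>k. x $ k \<in> P k ! j k)"
        proof
          assume "ci P x = j" then show "\<forall>k. x $ k \<in> P k ! j k" using c by (auto simp: ci_def)
        next
          assume "\<forall>k. x $ k \<in> P k ! j k"
          then show "ci P x = j" unfolding ci_def using cell_idx_eq[OF P True[rule_format]] by auto
        qed
        then show ?thesis using xb sp by auto
      qed (use sp in auto)
    qed
    also have "\<dots> \<in> sets M"
    proof (rule sets_M_Int[OF Ms])
      have "is_interval (P k ! j k)" for k
        using P True by (auto simp: prod_partition_def interval_partition_def)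
      then show "(\<Inter>k\<in>UNIV. {x::(real,'d) vec. x $ k \<in> P k ! j k}) \<in> sets borel"
        by (intro sets.finite_INT vec_nth_borel) auto
    qed
    finally show ?thesis .
  next
    case False
    then obtain k where k: "\<not> j k < length (P k)" by auto
    have e: "{x\<in>space M. ci P x = j} = {}"
      using ci_lt[OF P] sp k by fastforce
    show ?thesis unfolding e by simp
  qed
  with fin show ?thesis by (simp add: rv_def)
qed

lemma rv_cn:
  fixes J :: "'d::{finite,linorder} \<Rightarrow> real set" and M :: "(real,'d) vec measure"
  assumes Mp: "prob_space M" and Ms: "sets M = sets (restrict_space borel (box_of J))" and P: "prod_partition J P"
  shows "rv M (cell_number P)"
  by (rule prob_space.rv_fun[OF Mp rv_ci[OF Mp Ms P]]) (auto simp: cell_number_W)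

lemma inner_approx:
  fixes J :: "'d::{finite,linorder} \<Rightarrow> real set" and M :: "(real,'d) vec measure"
  assumes Mp: "prob_space M" and Ms: "sets M = sets (restrict_space borel (box_of J))" and Jint: "\<And>k. is_interval (J k)"
    and A: "A \<in> sets M" and e: "e > 0"
  shows "\<exists>K. compact K \<and> K \<subseteq> A \<and> K \<in> sets M \<and> measure M A - measure M K < e"
proof -
  interpret prob_space M by (rule Mp)
  have sp: "space M = box_of J" by (rule space_M[OF Ms])
  have Bb: "box_of J \<in> sets borel" by (rule box_borel[OF Jint])
  have Aborel: "A \<in> sets borel"
  proof -
    obtain B where "B \<in> sets borel" "A = box_of J \<inter> B" using A Ms by (auto simp: sets_restrict_space)
    then show ?thesis using Bb by auto
  qed
  have AO: "A \<subseteq> box_of J" using sets.sets_into_space[OF A] sp by simp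
  have KM: "K \<in> sets M" if "compact K" "K \<subseteq> A" for K
  proof -
    have "K \<in> sets borel" using that by (simp add: compact_imp_closed borel_closed)
    then have "box_of J \<inter> K \<in> sets M" by (rule sets_M_Int[OF Ms])
    moreover have "box_of J \<inter> K = K" using that AO by auto
    ultimately show ?thesis by simp
  qed
  have id_meas: "(\<lambda>x. x) \<in> measurable M borel"
  proof -
    have "(\<lambda>x. x) \<in> measurable (restrict_space borel (box_of J)) borel"
      by (rule measurable_restrict_space1) simp
    moreover have "measurable M borel = measurable (restrict_space borel (box_of J)) borel"
      by (rule measurable_cong_sets[OF Ms refl])
    ultimately show ?thesis by metis
  qed
  define N where "N = distr M borel (\<lambda>x. x)"
  have sN: "sets N = sets borel" by (simp add: N_def)
  have eN: "emeasure N B = emeasure M B" if "B \<in> sets borel" "B \<subseteq> box_of J" for B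
  proof -
    have "emeasure N B = emeasure M ((\<lambda>x. x) -` B \<inter> space M)" unfolding N_def
      by (rule emeasure_distr[OF id_meas that(1)])
    also have "(\<lambda>x. x) -` B \<inter> space M = B" using that sp by auto
    finally show ?thesis .
  qed
  have fin: "emeasure N (space N) \<noteq> \<infinity>"
  proof -
    have "space N = UNIV" by (simp add: N_def)
    then have "emeasure N (space N) = emeasure M ((\<lambda>x. x) -` UNIV \<inter> space M)" unfolding N_def
      using emeasure_distr[OF id_meas, of UNIV] by simp
    then show ?thesis by simp
  qed
  have reg: "emeasure N A = (SUP K \<in> {K. K \<subseteq> A \<and> compact K}. emeasure N K)"
    by (rule inner_regular[OF sN fin Aborel])
  show ?thesis
  proof (cases "prob A < e")
    case True
    then show ?thesis by (intro exI[of _ "{}"]) auto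
  next
    case False
    then have "ennreal (prob A - e) < ennreal (prob A)" using e by (intro ennreal_lessI) auto
    also have "ennreal (prob A) = emeasure N A" using eN[OF Aborel AO] by (simp add: emeasure_eq_measure)
    finally have "ennreal (prob A - e) < (SUP K \<in> {K. K \<subseteq> A \<and> compact K}. emeasure N K)" using reg by simp
    then obtain K where K: "K \<subseteq> A" "compact K" "ennreal (prob A - e) < emeasure N K"
      by (auto simp: less_SUP_iff)
    have "emeasure N K = ennreal (prob K)"
      using eN[of K] K AO by (simp add: compact_imp_closed borel_closed emeasure_eq_measure)
    then have "prob A - e < prob K" using K(3) False e by (simp add: ennreal_less_iff)
    then show ?thesis using K KM[OF K(2,1)] by (intro exI[of _ K]) auto
  qed
qed



lemma approx_cells:
  fixes J :: "'d::{finite,linorder} \<Rightarrow> real set" and M :: "(real,'d) vec measure"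
  assumes Mp: "prob_space M" and Ms: "sets M = sets (restrict_space borel (box_of J))"
    and Jint: "\<And>k. is_interval (J k)" and Jbdd: "\<And>k. bounded (J k)"
    and \<alpha>: "finite_meas_partition M \<alpha>" and e: "e > 0"
  shows "\<exists>\<delta>>0. \<forall>P. prod_partition J P \<and> part_norm P < \<delta> \<longrightarrow>
           (\<exists>a. measure M {x\<in>space M. pidx \<alpha> x \<noteq> a (cell_number P x)} < e)"
proof -
  interpret prob_space M by (rule Mp)
  have sp: "space M = box_of J" by (rule space_M[OF Ms])
  have fa: "finite \<alpha>" and sa: "\<alpha> \<subseteq> sets M" and ua: "\<Union>\<alpha> = space M"
    and da: "\<And>A B. A \<in> \<alpha> \<Longrightarrow> B \<in> \<alpha> \<Longrightarrow> A \<noteq> B \<Longrightarrow> A \<inter> B = {}"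
    using \<alpha> by (auto simp: finite_meas_partition_def)
  have ane: "\<alpha> \<noteq> {}" using ua not_empty by auto
  have ca: "card \<alpha> > 0" using fa ane by (simp add: card_gt_0_iff)
  define e' where "e' = e / card \<alpha>"
  have e': "e' > 0" using e ca by (simp add: e'_def)
  have "\<forall>A\<in>\<alpha>. \<exists>K. compact K \<and> K \<subseteq> A \<and> K \<in> sets M \<and> prob A - prob K < e'"
    using inner_approx[OF Mp Ms Jint _ e'] sa by blast
  then obtain K where K: "\<And>A. A \<in> \<alpha> \<Longrightarrow> compact (K A) \<and> K A \<subseteq> A \<and> K A \<in> sets M \<and> prob A - prob (K A) < e'"
    by metis
  define U where "U A = \<Union>(K ` (\<alpha> - {A}))" for A
  have "\<forall>A\<in>\<alpha>. \<exists>d>0. \<forall>x\<in>K A. \<forall>y\<in>U A. d \<le> dist x y"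
  proof
    fix A assume A: "A \<in> \<alpha>"
    have "compact (U A)" unfolding U_def using fa K by (intro compact_UN) auto
    then have "closed (U A)" by (rule compact_imp_closed)
    moreover have "K A \<inter> U A = {}"
    proof -
      have "K A \<inter> K B = {}" if "B \<in> \<alpha>" "B \<noteq> A" for B
        using K[OF A] K[OF that(1)] da[OF A that(1)] that(2) by blast
      then show ?thesis unfolding U_def by blast
    qed
    ultimately show "\<exists>d>0. \<forall>x\<in>K A. \<forall>y\<in>U A. d \<le> dist x y"
      using separate_compact_closed[of "K A" "U A"] K[OF A] by blast
  qed
  then obtain d where d: "\<And>A. A \<in> \<alpha> \<Longrightarrow> d A > 0 \<and> (\<forall>x\<in>K A. \<forall>y\<in>U A. d A \<le> dist x y)"
    by metis
  define \<eta> where "\<eta> = Min (d ` \<alpha>)"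
  have \<eta>: "\<eta> > 0" unfolding \<eta>_def using fa ane d by (subst Min_gr_iff) auto
  have \<eta>le: "\<eta> \<le> d A" if "A \<in> \<alpha>" for A unfolding \<eta>_def using fa that by (intro Min_le) auto
  define \<delta> where "\<delta> = \<eta> / real CARD('d)"
  have \<delta>: "\<delta> > 0" using \<eta> by (simp add: \<delta>_def)
  show ?thesis
  proof (intro exI[of _ \<delta>] conjI \<delta> allI impI)
    fix P assume P: "prod_partition J P \<and> part_norm P < \<delta>"
    define a where "a c = (SOME A. A \<in> \<alpha> \<and> (\<exists>y\<in>K A. cell_number P y = c))" for c
    have a_ok: "a (cell_number P x) = A" if A: "A \<in> \<alpha>" and x: "x \<in> K A" for A x
    proof -
      have "\<exists>A'. A' \<in> \<alpha> \<and> (\<exists>y\<in>K A'. cell_number P y = cell_number P x)" using A x by blast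
      then have "a (cell_number P x) \<in> \<alpha> \<and> (\<exists>y\<in>K (a (cell_number P x)). cell_number P y = cell_number P x)"
        unfolding a_def by (rule someI_ex)
      then obtain y where A': "a (cell_number P x) \<in> \<alpha>" and y: "y \<in> K (a (cell_number P x))"
        and cy: "cell_number P y = cell_number P x" by blast
      have xO: "x \<in> box_of J" using K[OF A] x sa A sets.sets_into_space sp by blast
      have yO: "y \<in> box_of J" using K[OF A'] y sa A' sets.sets_into_space sp by blast
      have "ci P x = ci P y" using cn_inj[OF conjunct1[OF P] xO yO cy[symmetric]] .
      then have "dist x y \<le> real CARD('d) * part_norm P" using cell_dist[OF conjunct1[OF P] Jbdd xO yO] by blast
      also have "\<dots> < real CARD('d) * \<delta>" using P by (intro mult_strict_left_mono) auto
      also have "\<dots> = \<eta>" by (simp add: \<delta>_def)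
      also have "\<dots> \<le> d A" by (rule \<eta>le[OF A])
      finally have dxy: "dist x y < d A" .
      show ?thesis
      proof (rule ccontr)
        assume ne: "a (cell_number P x) \<noteq> A"
        then have "y \<in> U A" unfolding U_def using A' y by blast
        then have "d A \<le> dist x y" using d[OF A] x by blast
        then show False using dxy by simp
      qed
    qed
    have sub: "{x\<in>space M. pidx \<alpha> x \<noteq> a (cell_number P x)} \<subseteq> (\<Union>A\<in>\<alpha>. A - K A)"
    proof
      fix x assume x: "x \<in> {x\<in>space M. pidx \<alpha> x \<noteq> a (cell_number P x)}"
      then have xs: "x \<in> space M" and ne: "pidx \<alpha> x \<noteq> a (cell_number P x)" by auto
      have A: "pidx \<alpha> x \<in> \<alpha>" "x \<in> pidx \<alpha> x" using pidx_in[OF \<alpha> xs] by auto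
      have "x \<notin> K (pidx \<alpha> x)" using a_ok[OF A(1)] ne by metis
      then show "x \<in> (\<Union>A\<in>\<alpha>. A - K A)" using A by blast
    qed
    have meas: "(\<lambda>A. A - K A) ` \<alpha> \<subseteq> sets M" using sa K by auto
    have "measure M {x\<in>space M. pidx \<alpha> x \<noteq> a (cell_number P x)} \<le> measure M (\<Union>A\<in>\<alpha>. A - K A)"
      by (rule finite_measure_mono[OF sub]) (use fa meas in auto)
    also have "\<dots> \<le> (\<Sum>A\<in>\<alpha>. measure M (A - K A))"
      by (rule finite_measure_subadditive_finite[OF fa meas])
    also have "\<dots> = (\<Sum>A\<in>\<alpha>. prob A - prob (K A))"
      by (intro sum.cong refl finite_measure_Diff) (use sa K in auto)
    also have "\<dots> < (\<Sum>A\<in>\<alpha>. e')"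
      by (rule sum_strict_mono[OF fa ane]) (use K in auto)
    also have "\<dots> = e" using ca by (simp add: e'_def)
    finally show "\<exists>a. measure M {x\<in>space M. pidx \<alpha> x \<noteq> a (cell_number P x)} < e" by blast
  qed
qed


lemma ev_fine:
  assumes "\<delta> > 0" "\<And>P. prod_partition J P \<Longrightarrow> part_norm P < \<delta> \<Longrightarrow> Q P"
  shows "eventually Q (fine_partitions J)"
  unfolding fine_partitions_def
  by (rule eventually_INF1[of \<delta>]) (use assms in \<open>auto simp: eventually_principal\<close>)

lemma cell_part:
  fixes J :: "'d::{finite,linorder} \<Rightarrow> real set" and M :: "(real,'d) vec measure"
  assumes Mp: "prob_space M" and Ms: "sets M = sets (restrict_space borel (box_of J))"
    and P: "prod_partition J P" and f: "measure_preserving_map M f"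
  defines "\<alpha> \<equiv> (\<lambda>c. {x\<in>space M. cell_number P x = c}) ` (cell_number P ` space M)"
  shows "finite_meas_partition M \<alpha>" and "hrate M f (pidx \<alpha>) = hrate M f (cell_number P)"
proof -
  interpret prob_space M by (rule Mp)
  have cn: "rv M (cell_number P)" by (rule rv_cn[OF Mp Ms P])
  show FMP: "finite_meas_partition M \<alpha>"
    unfolding finite_meas_partition_def
  proof (intro conjI)
    show "finite \<alpha>" unfolding \<alpha>_def using cn by (simp add: rv_def)
    show "\<alpha> \<subseteq> sets M" unfolding \<alpha>_def using cn by (auto simp: rv_def)
    show "\<Union>\<alpha> = space M" unfolding \<alpha>_def by auto
    show "\<forall>A\<in>\<alpha>. \<forall>B\<in>\<alpha>. A \<noteq> B \<longrightarrow> A \<inter> B = {}" unfolding \<alpha>_def by auto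
  qed
  have pid: "pidx \<alpha> x = {y\<in>space M. cell_number P y = cell_number P x}" if "x \<in> space M" for x
    by (rule pidx_unique[OF FMP]) (use that in \<open>auto simp: \<alpha>_def\<close>)
  have sp: "(f ^^ i) x \<in> space M" if "x \<in> space M" for i x
    using mp_space[OF mp_funpow[OF f] that] .
  have eq: "Hent M (blk f (pidx \<alpha>) L) = Hent M (blk f (cell_number P) L)" for L
  proof (rule antisym)
    show "Hent M (blk f (pidx \<alpha>) L) \<le> Hent M (blk f (cell_number P) L)"
    proof (rule Hent_fun[OF rv_blk[OF f cn]], intro ballI impI)
      fix x y assume x: "x \<in> space M" and y: "y \<in> space M" and e: "blk f (cell_number P) L x = blk f (cell_number P) L y"
      show "blk f (pidx \<alpha>) L x = blk f (pidx \<alpha>) L y"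
      proof (rule nth_equalityI)
        fix i assume "i < length (blk f (pidx \<alpha>) L x)"
        then have i: "i < L" by simp
        have "blk f (cell_number P) L x ! i = blk f (cell_number P) L y ! i" using e by simp
        then have "cell_number P ((f ^^ i) x) = cell_number P ((f ^^ i) y)" using i by simp
        then show "blk f (pidx \<alpha>) L x ! i = blk f (pidx \<alpha>) L y ! i"
          using i pid[OF sp[OF x]] pid[OF sp[OF y]] by simp
      qed simp
    qed
    show "Hent M (blk f (cell_number P) L) \<le> Hent M (blk f (pidx \<alpha>) L)"
    proof (rule Hent_fun[OF rv_blk[OF f rv_pidx[OF FMP]]], intro ballI impI)
      fix x y assume x: "x \<in> space M" and y: "y \<in> space M" and e: "blk f (pidx \<alpha>) L x = blk f (pidx \<alpha>) L y"
      show "blk f (cell_number P) L x = blk f (cell_number P) L y"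
      proof (rule nth_equalityI)
        fix i assume "i < length (blk f (cell_number P) L x)"
        then have i: "i < L" by simp
        have "blk f (pidx \<alpha>) L x ! i = blk f (pidx \<alpha>) L y ! i" using e by simp
        then have "pidx \<alpha> ((f ^^ i) x) = pidx \<alpha> ((f ^^ i) y)" using i by simp
        then have "{z\<in>space M. cell_number P z = cell_number P ((f ^^ i) x)} = {z\<in>space M. cell_number P z = cell_number P ((f ^^ i) y)}"
          using pid[OF sp[OF x]] pid[OF sp[OF y]] by simp
        moreover have "(f ^^ i) x \<in> {z\<in>space M. cell_number P z = cell_number P ((f ^^ i) x)}" using sp[OF x] by simp
        ultimately have "cell_number P ((f ^^ i) x) = cell_number P ((f ^^ i) y)" by blast
        then show "blk f (cell_number P) L x ! i = blk f (cell_number P) L y ! i" using i by simp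
      qed simp
    qed
  qed
  show "hrate M f (pidx \<alpha>) = hrate M f (cell_number P)" unfolding hrate_def eq ..
qed

theorem theorem3:
  fixes J :: "'d::{finite,linorder} \<Rightarrow> real set"
    and M :: "((real, 'd) vec) measure"
    and f :: "(real, 'd) vec \<Rightarrow> (real, 'd) vec"
  assumes J_int: "\<And>k. is_interval (J k)"
    and J_bdd: "\<And>k. bounded (J k)"
    and J_ne: "\<And>k. J k \<noteq> {}"
    and M_sets: "sets M = sets (restrict_space borel (box_of J))"
    and M_prob: "prob_space M"
    and erg: "ergodic M f"
  shows "(\<forall>\<^sub>F P in fine_partitions J.
            convergent (perm_entropy_seq M (simple_obs P f)))
       \<and> ((\<lambda>P. ereal (perm_entropy_rate_proc M (simple_obs P f)))
            \<longlongrightarrow> ks_entropy M f) (fine_partitions J)"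
proof -
  interpret prob_space M by (rule M_prob)
  have sp: "space M = box_of J" by (rule space_M[OF M_sets])
  have mp: "measure_preserving_map M f" using erg by (simp add: ergodic_def)
  define hP where "hP P = hrate M f (cell_number P)" for P
  have conv: "perm_entropy_seq M (simple_obs P f) \<longlonglongrightarrow> hP P" if P: "prod_partition J P" for P
  proof -
    have V: "\<And>x. x \<in> space M \<Longrightarrow> cell_number P x \<le> (\<Prod>k\<in>UNIV. length (P k))"
      using cn_bound[OF P] sp by simp
    show ?thesis unfolding hP_def
      by (rule perm_entropy_conv[OF mp rv_cn[OF M_prob M_sets P] _ V]) (simp add: simple_obs_def)
  qed
  have rate: "perm_entropy_rate_proc M (simple_obs P f) = hP P" if P: "prod_partition J P" for P
    unfolding perm_entropy_rate_proc_def using conv[OF P] by (rule limI)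
  have ks: "ks_entropy M f = (SUP \<alpha>\<in>{\<alpha>. finite_meas_partition M \<alpha>}. ereal (hrate M f (pidx \<alpha>)))"
    unfolding ks_entropy_def hrate_def
    by (intro SUP_cong refl) (simp add: part_entropy_dyn_join[OF _ mp])
  have upper: "ereal (hP P) \<le> ks_entropy M f" if P: "prod_partition J P" for P
  proof -
    define \<alpha> where "\<alpha> = (\<lambda>c. {x\<in>space M. cell_number P x = c}) ` (cell_number P ` space M)"
    have F: "finite_meas_partition M \<alpha>" and h: "hrate M f (pidx \<alpha>) = hP P"
      using cell_part[OF M_prob M_sets P mp] unfolding \<alpha>_def hP_def by auto
    show ?thesis unfolding ks using F h by (intro SUP_upper2[of \<alpha>]) auto
  qed
  have lower: "eventually (\<lambda>P. hrate M f (pidx \<alpha>) \<le> hP P + \<eta>) (fine_partitions J)"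
    if \<alpha>: "finite_meas_partition M \<alpha>" and \<eta>: "\<eta> > 0" for \<alpha> \<eta>
  proof -
    define Lg where "Lg = log 2 (card (pidx \<alpha> ` space M))"
    have Lg: "0 \<le> Lg"
    proof -
      have "card (pidx \<alpha> ` space M) \<ge> 1" using rv_pidx[OF \<alpha>] not_empty
        by (auto simp: rv_def Suc_le_eq card_gt_0_iff)
      then show ?thesis by (simp add: Lg_def)
    qed
    define c where "c = \<eta> / (5 + Lg)"
    have c: "c > 0" using \<eta> Lg by (simp add: c_def)
    define e where "e = min 1 (c^2)"
    have e: "e > 0" using c by (simp add: e_def)
    obtain \<delta> where \<delta>: "\<delta> > 0" and app: "\<And>P. prod_partition J P \<and> part_norm P < \<delta> \<Longrightarrow>
           (\<exists>a. measure M {x\<in>space M. pidx \<alpha> x \<noteq> a (cell_number P x)} < e)"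
      using approx_cells[OF M_prob M_sets J_int J_bdd \<alpha> e] by blast
    show ?thesis
    proof (rule ev_fine[OF \<delta>])
      fix P assume P: "prod_partition J P" and nP: "part_norm P < \<delta>"
      obtain a where a: "measure M {x\<in>space M. pidx \<alpha> x \<noteq> a (cell_number P x)} < e" using app P nP by blast
      define p where "p = measure M {x\<in>space M. pidx \<alpha> x \<noteq> a (cell_number P x)}"
      have p0: "0 \<le> p" by (simp add: p_def)
      have p1: "p < 1" and pc: "p < c^2" using a e_def p_def by auto
      have sq: "sqrt p < c" using pc c p0 real_sqrt_less_iff[of p "c^2"] by simp
      have psq: "p \<le> sqrt p"
      proof -
        have s1: "sqrt p \<le> 1" using p1 p0 by simp
        have "p = sqrt p * sqrt p" using p0 by simp
        also have "\<dots> \<le> sqrt p * 1" using s1 p0 by (intro mult_left_mono) auto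
        finally show ?thesis by simp
      qed
      have X: "rv M (pidx \<alpha>)" by (rule rv_pidx[OF \<alpha>])
      have Y: "rv M (cell_number P)" by (rule rv_cn[OF M_prob M_sets P])
      have "hrate M f (pidx \<alpha>) \<le> hP P + Hent M (\<lambda>x. if pidx \<alpha> x = a (cell_number P x) then None else Some (pidx \<alpha> x))"
        unfolding hP_def by (rule hrate_perturb[OF mp X Y])
      also have "Hent M (\<lambda>x. if pidx \<alpha> x = a (cell_number P x) then None else Some (pidx \<alpha> x)) \<le> 2 * p + 3 * sqrt p + p * Lg"
        unfolding p_def Lg_def by (rule Hent_Z_bound[OF X Y])
      also have "2 * p + 3 * sqrt p + p * Lg \<le> sqrt p * (5 + Lg)"
      proof -
        have "p * Lg \<le> sqrt p * Lg" using psq Lg by (intro mult_right_mono) auto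
        then show ?thesis using psq by (simp add: algebra_simps)
      qed
      also have "\<dots> \<le> c * (5 + Lg)" using sq Lg by (intro mult_right_mono) auto
      also have "\<dots> = \<eta>" using Lg by (simp add: c_def)
      finally show "hrate M f (pidx \<alpha>) \<le> hP P + \<eta>" by simp
    qed
  qed
  have evP: "eventually (\<lambda>P. prod_partition J P) (fine_partitions J)"
    by (rule ev_fine[of 1]) auto
  show ?thesis
  proof
    show "\<forall>\<^sub>F P in fine_partitions J. convergent (perm_entropy_seq M (simple_obs P f))"
      using evP by eventually_elim (use conv in \<open>auto simp: convergent_def\<close>)
    show "((\<lambda>P. ereal (perm_entropy_rate_proc M (simple_obs P f))) \<longlongrightarrow> ks_entropy M f) (fine_partitions J)"
    proof (rule order_tendstoI)
      fix y assume y: "y < ks_entropy M f"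
      then obtain \<alpha> where \<alpha>: "finite_meas_partition M \<alpha>" and ya: "y < ereal (hrate M f (pidx \<alpha>))"
        unfolding ks by (auto simp: less_SUP_iff)
      obtain r where r: "y < ereal r" "ereal r < ereal (hrate M f (pidx \<alpha>))" using ereal_dense2[OF ya] by blast
      have rr: "r < hrate M f (pidx \<alpha>)" using r(2) by simp
      have "eventually (\<lambda>P. hrate M f (pidx \<alpha>) \<le> hP P + (hrate M f (pidx \<alpha>) - r) / 2) (fine_partitions J)"
        by (rule lower[OF \<alpha>]) (use rr in simp)
      then show "\<forall>\<^sub>F P in fine_partitions J. y < ereal (perm_entropy_rate_proc M (simple_obs P f))"
        using evP
      proof eventually_elim
        case (elim P)
        have "r < hP P" using elim(1) rr by (simp add: field_simps)
        then have "ereal r < ereal (perm_entropy_rate_proc M (simple_obs P f))" using rate[OF elim(2)] by simp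
        then show ?case using r(1) by (rule less_trans[rotated])
      qed
    next
      fix y assume y: "ks_entropy M f < y"
      show "\<forall>\<^sub>F P in fine_partitions J. ereal (perm_entropy_rate_proc M (simple_obs P f)) < y"
        using evP
      proof eventually_elim
        case (elim P)
        show ?case using upper[OF elim] rate[OF elim] y by simp
      qed
    qed
  qed
qed


end
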